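(* Let $V$ be a locally convex space, $\Omega\subset V$ open, and $g$ a Riemannian metric on $\Omega$ admitting a Levi–Civita connection of class $C^k$, $k\ge1$. Then every geodesic of $g$ is $C^{k+2}$.
   Context: All locally convex spaces are real, Hausdorff and sequentially complete. $C^k$ maps: $f$ is $C^1$ if directional derivatives $df(v,\xi)=\lim_{t\to0}(f(v+t\xi)-f(v))/t$ exist and $df$ is continuous; $C^k$ inductively. A Riemannian metric on $\Omega$ is a map $g\colon\Omega\times V\times V\to\mathbb R$ with each $g(v,\cdot,\cdot)$ positive definite symmetric bilinear. A connection on $\Omega\times V\to\Omega$ is $D_\xi\varphi(v)=d\varphi(v,\xi)+A(v,\xi)\varphi(v)$ with $A(v,\xi)$ a continuous linear map $V\to V$, linear in $\xi$, and $(v,\xi,w)\mapsto A(v,\xi)w$ continuous; it is of class $C^k$ if this map is $C^k$. For a $C^1$ metric $g$, a Levi–Civita connection is such a $D$ with $A(v,\xi)\eta=A(v,\eta)\xi$ and $\xi g(\cdot,\varphi,\psi)=g(\cdot,D_\xi\varphi,\psi)+g(\cdot,\varphi,D_\xi\psi)$ for all $\xi\in V$, $\varphi,\psi\in C^1(\Omega,V)$. A geodesic is a $C^2$ curve $x\colon I\to\Omega$ on an interval $I\subset\mathbb R$ with $\frac{d^2x}{dt^2}+A\big(x,\frac{dx}{dt}\big)\frac{dx}{dt}=0$. *)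

theory Defs
  imports "HOL-Analysis.Analysis"
begin

definition lcs_axioms :: "'a::{real_vector,topological_space} itself \<Rightarrow> bool" where
  "lcs_axioms _ \<longleftrightarrow>
     \<comment> \<open>addition is continuous\<close>
     (\<forall>U a b. open (U::'a set) \<and> a + b \<in> U \<longrightarrow>
        (\<exists>Ua Ub. open Ua \<and> open Ub \<and> a \<in> Ua \<and> b \<in> Ub \<and> (\<forall>x\<in>Ua. \<forall>y\<in>Ub. x + y \<in> U))) \<and>
     \<comment> \<open>scalar multiplication is continuous\<close>
     (\<forall>U r a. open (U::'a set) \<and> r *\<^sub>R a \<in> U \<longrightarrow>
        (\<exists>R Ua. open (R::real set) \<and> open Ua \<and> r \<in> R \<and> a \<in> Ua \<and> (\<forall>s\<in>R. \<forall>y\<in>Ua. s *\<^sub>R y \<in> U))) \<and>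
     \<comment> \<open>locally convex: convex open neighbourhood basis\<close>
     (\<forall>U x. open (U::'a set) \<and> x \<in> U \<longrightarrow> (\<exists>C. open C \<and> convex C \<and> x \<in> C \<and> C \<subseteq> U)) \<and>
     \<comment> \<open>sequentially complete: every Cauchy sequence converges\<close>
     (\<forall>X::nat \<Rightarrow> 'a.
        (\<forall>U. open U \<and> 0 \<in> U \<longrightarrow> (\<exists>N. \<forall>m\<ge>N. \<forall>n\<ge>N. X m - X n \<in> U))
        \<longrightarrow> (\<exists>l. X \<longlonglongrightarrow> l))"

text \<open>Throughout, V is a type 'a of sort {real_vector,t2_space} (Hausdorff by sort)
  for which lcs_axioms TYPE('a) is assumed.\<close>

text \<open>Continuity of a map U x V^j -> W (product topology, U with the subspace
  topology); points of V^j are represented as lists of length j.\<close>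
definition cont_multi ::
  "'a::topological_space set \<Rightarrow> nat \<Rightarrow> ('a \<Rightarrow> 'a list \<Rightarrow> 'b::topological_space) \<Rightarrow> bool" where
  "cont_multi U j F \<longleftrightarrow>
     (\<forall>v\<in>U. \<forall>xs. length xs = j \<longrightarrow>
        (\<forall>W. open W \<and> F v xs \<in> W \<longrightarrow>
          (\<exists>N Ns. open N \<and> v \<in> N \<and> length Ns = j \<and>
             (\<forall>i<j. open (Ns ! i) \<and> xs ! i \<in> Ns ! i) \<and>
             (\<forall>v'\<in>N \<inter> U. \<forall>ys. length ys = j \<and> (\<forall>i<j. ys ! i \<in> Ns ! i) \<longrightarrow> F v' ys \<in> W))))"

text \<open>f is C^k on the open set U: the iterated directional derivatives
  d^j f(v; xi_1,...,xi_j) exist for j \<le> k and are continuous on U x V^j.\<close>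
definition Ck ::
  "nat \<Rightarrow> ('a::{real_vector,topological_space} \<Rightarrow> 'b::{real_vector,topological_space})
     \<Rightarrow> 'a set \<Rightarrow> bool" where
  "Ck k f U \<longleftrightarrow>
     (\<exists>D :: nat \<Rightarrow> 'a \<Rightarrow> 'a list \<Rightarrow> 'b.
        (\<forall>v\<in>U. D 0 v [] = f v) \<and>
        (\<forall>j<k. \<forall>v\<in>U. \<forall>xs \<eta>. length xs = j \<longrightarrow>
           ((\<lambda>t::real. (1 / t) *\<^sub>R (D j (v + t *\<^sub>R \<eta>) xs - D j v xs))
              \<longlongrightarrow> D (Suc j) v (xs @ [\<eta>])) (at 0)) \<and>
        (\<forall>j\<le>k. cont_multi U j (D j)))"

definition dirderiv ::
  "('a::real_vector \<Rightarrow> 'b::{real_vector,t2_space}) \<Rightarrow> 'a \<Rightarrow> 'a \<Rightarrow> 'b" where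
  "dirderiv f v \<xi> = Lim (at (0::real)) (\<lambda>t. (1 / t) *\<^sub>R (f (v + t *\<^sub>R \<xi>) - f v))"

definition riemannian_metric :: "'a::{real_vector,t2_space} set \<Rightarrow> ('a \<Rightarrow> 'a \<Rightarrow> 'a \<Rightarrow> real) \<Rightarrow> bool" where
  "riemannian_metric \<Omega> g \<longleftrightarrow>
     (\<forall>v\<in>\<Omega>. (\<forall>\<xi>. linear (g v \<xi>)) \<and> (\<forall>\<xi> \<eta>. g v \<xi> \<eta> = g v \<eta> \<xi>) \<and>
             (\<forall>\<xi>. \<xi> \<noteq> 0 \<longrightarrow> g v \<xi> \<xi> > 0))"

text \<open>A connection D_xi phi (v) = d phi(v,xi) + A(v,xi) phi(v), given by A v xi w = A(v,xi)w.\<close>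
definition connection :: "'a::{real_vector,t2_space} set \<Rightarrow> ('a \<Rightarrow> 'a \<Rightarrow> 'a \<Rightarrow> 'a) \<Rightarrow> bool" where
  "connection \<Omega> A \<longleftrightarrow>
     (\<forall>v\<in>\<Omega>. \<forall>\<xi>. linear (A v \<xi>) \<and> continuous_on UNIV (A v \<xi>)) \<and>
     (\<forall>v\<in>\<Omega>. \<forall>w. linear (\<lambda>\<xi>. A v \<xi> w)) \<and>
     continuous_on (\<Omega> \<times> UNIV \<times> UNIV) (\<lambda>(v, \<xi>, w). A v \<xi> w)"

definition covderiv :: "('a::{real_vector,t2_space} \<Rightarrow> 'a \<Rightarrow> 'a \<Rightarrow> 'a) \<Rightarrow> 'a \<Rightarrow> ('a \<Rightarrow> 'a) \<Rightarrow> 'a \<Rightarrow> 'a" where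
  "covderiv A \<xi> \<phi> v = dirderiv \<phi> v \<xi> + A v \<xi> (\<phi> v)"

definition connection_Ck :: "nat \<Rightarrow> 'a::{real_vector,t2_space} set \<Rightarrow> ('a \<Rightarrow> 'a \<Rightarrow> 'a \<Rightarrow> 'a) \<Rightarrow> bool" where
  "connection_Ck k \<Omega> A \<longleftrightarrow> Ck k (\<lambda>(v, \<xi>, w). A v \<xi> w) (\<Omega> \<times> UNIV \<times> UNIV)"

definition metric_Ck :: "nat \<Rightarrow> 'a::{real_vector,t2_space} set \<Rightarrow> ('a \<Rightarrow> 'a \<Rightarrow> 'a \<Rightarrow> real) \<Rightarrow> bool" where
  "metric_Ck k \<Omega> g \<longleftrightarrow> Ck k (\<lambda>(v, \<xi>, \<eta>). g v \<xi> \<eta>) (\<Omega> \<times> UNIV \<times> UNIV)"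

definition levi_civita :: "'a::{real_vector,t2_space} set \<Rightarrow> ('a \<Rightarrow> 'a \<Rightarrow> 'a \<Rightarrow> real) \<Rightarrow> ('a \<Rightarrow> 'a \<Rightarrow> 'a \<Rightarrow> 'a) \<Rightarrow> bool" where
  "levi_civita \<Omega> g A \<longleftrightarrow>
     connection \<Omega> A \<and>
     (\<forall>v\<in>\<Omega>. \<forall>\<xi> \<eta>. A v \<xi> \<eta> = A v \<eta> \<xi>) \<and>
     (\<forall>\<xi> \<phi> \<psi>. Ck 1 \<phi> \<Omega> \<and> Ck 1 \<psi> \<Omega> \<longrightarrow>
        (\<forall>v\<in>\<Omega>.
           ((\<lambda>t::real. (1 / t) * (g (v + t *\<^sub>R \<xi>) (\<phi> (v + t *\<^sub>R \<xi>)) (\<psi> (v + t *\<^sub>R \<xi>))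
                                   - g v (\<phi> v) (\<psi> v)))
             \<longlongrightarrow> g v (covderiv A \<xi> \<phi> v) (\<psi> v) + g v (\<phi> v) (covderiv A \<xi> \<psi> v)) (at 0)))"

text \<open>X 0, ..., X k are x and its successive derivatives on the interval I
  (one-sided at endpoints belonging to I), all continuous on I.\<close>
definition curve_derivs :: "nat \<Rightarrow> (nat \<Rightarrow> real \<Rightarrow> 'a::{real_vector,t2_space}) \<Rightarrow> (real \<Rightarrow> 'a) \<Rightarrow> real set \<Rightarrow> bool" where
  "curve_derivs k X x I \<longleftrightarrow>
     (\<forall>t\<in>I. X 0 t = x t) \<and>
     (\<forall>j<k. \<forall>t\<in>I. ((\<lambda>s. (1 / (s - t)) *\<^sub>R (X j s - X j t)) \<longlongrightarrow> X (Suc j) t) (at t within I)) \<and>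
     (\<forall>j\<le>k. continuous_on I (X j))"

definition curve_Ck :: "nat \<Rightarrow> (real \<Rightarrow> 'a::{real_vector,t2_space}) \<Rightarrow> real set \<Rightarrow> bool" where
  "curve_Ck k x I \<longleftrightarrow> (\<exists>X. curve_derivs k X x I)"

definition geodesic :: "'a::{real_vector,t2_space} set \<Rightarrow> ('a \<Rightarrow> 'a \<Rightarrow> 'a \<Rightarrow> 'a) \<Rightarrow> real set \<Rightarrow> (real \<Rightarrow> 'a) \<Rightarrow> bool" where
  "geodesic \<Omega> A I x \<longleftrightarrow>
     is_interval I \<and> (\<forall>t\<in>I. x t \<in> \<Omega>) \<and>
     (\<exists>X. curve_derivs 2 X x I \<and> (\<forall>t\<in>I. X 2 t + A (x t) (X 1 t) (X 1 t) = 0))"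

end

theory Submission
  imports Defs "HOL-Analysis.Analysis"
begin


definition tvs :: "'w::{real_vector,t2_space} itself \<Rightarrow> bool" where
 "tvs _ \<longleftrightarrow> (\<forall>p. isCont (\<lambda>z::'w\<times>'w. fst z + snd z) p) \<and> (\<forall>p. isCont (\<lambda>z::real\<times>'w. fst z *\<^sub>R snd z) p)"

lemma tvs_add:
  fixes f g :: "'b \<Rightarrow> 'w::{real_vector,t2_space}"
  assumes "tvs TYPE('w)" "(f \<longlongrightarrow> a) F" "(g \<longlongrightarrow> b) F"
  shows "((\<lambda>x. f x + g x) \<longlongrightarrow> a + b) F"
proof -
  have "((\<lambda>x. (f x, g x)) \<longlongrightarrow> (a, b)) F" using assms(2,3) by (rule tendsto_Pair)
  from isCont_tendsto_compose[OF _ this, of "\<lambda>z. fst z + snd z"] assms(1)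
  show ?thesis unfolding tvs_def by simp
qed

lemma tvs_scale:
  fixes f :: "'b \<Rightarrow> 'w::{real_vector,t2_space}"
  assumes "tvs TYPE('w)" "(r \<longlongrightarrow> c) F" "(f \<longlongrightarrow> a) F"
  shows "((\<lambda>x. r x *\<^sub>R f x) \<longlongrightarrow> c *\<^sub>R a) F"
proof -
  have "((\<lambda>x. (r x, f x)) \<longlongrightarrow> (c, a)) F" using assms(2,3) by (rule tendsto_Pair)
  from isCont_tendsto_compose[OF _ this, of "\<lambda>z. fst z *\<^sub>R snd z"] assms(1)
  show ?thesis unfolding tvs_def by simp
qed

lemma tvs_minus:
  fixes f :: "'b \<Rightarrow> 'w::{real_vector,t2_space}"
  assumes "tvs TYPE('w)" "(f \<longlongrightarrow> a) F"
  shows "((\<lambda>x. - f x) \<longlongrightarrow> - a) F"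
  using tvs_scale[OF assms(1) tendsto_const assms(2), of "-1"] by simp

lemma tvs_diff:
  fixes f g :: "'b \<Rightarrow> 'w::{real_vector,t2_space}"
  assumes "tvs TYPE('w)" "(f \<longlongrightarrow> a) F" "(g \<longlongrightarrow> b) F"
  shows "((\<lambda>x. f x - g x) \<longlongrightarrow> a - b) F"
  using tvs_add[OF assms(1) assms(2) tvs_minus[OF assms(1) assms(3)]] by simp

lemma tvs_sum:
  fixes f :: "'i \<Rightarrow> 'b \<Rightarrow> 'w::{real_vector,t2_space}"
  assumes "tvs TYPE('w)" "finite S" "\<And>i. i \<in> S \<Longrightarrow> (f i \<longlongrightarrow> a i) F"
  shows "((\<lambda>x. \<Sum>i\<in>S. f i x) \<longlongrightarrow> (\<Sum>i\<in>S. a i)) F"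
  using assms(2,3)
proof (induction S rule: finite_induct)
  case empty then show ?case by simp
next
  case (insert j S)
  then show ?case by (simp add: tvs_add[OF assms(1)])
qed

lemma lcs_tvs:
  assumes "lcs_axioms TYPE('a::{real_vector,t2_space})"
  shows "tvs TYPE('a)"
  unfolding tvs_def
proof safe
  fix p :: "'a \<times> 'a"
  show "isCont (\<lambda>z::'a\<times>'a. fst z + snd z) p"
    unfolding continuous_at
  proof (rule topological_tendstoI)
    fix W assume W: "open W" "fst p + snd p \<in> W"
    then obtain Ua Ub where U: "open Ua" "open Ub" "fst p \<in> Ua" "snd p \<in> Ub" "\<forall>x\<in>Ua. \<forall>y\<in>Ub. x + y \<in> W"
      using assms unfolding lcs_axioms_def by meson
    show "\<forall>\<^sub>F x in at p. fst x + snd x \<in> W"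
      unfolding eventually_at_topological
      by (rule exI[of _ "Ua \<times> Ub"]) (use U in \<open>auto intro: open_Times simp: mem_Times_iff\<close>)
  qed
next
  fix p :: "real \<times> 'a"
  show "isCont (\<lambda>z::real\<times>'a. fst z *\<^sub>R snd z) p"
    unfolding continuous_at
  proof (rule topological_tendstoI)
    fix W assume W: "open W" "fst p *\<^sub>R snd p \<in> W"
    then obtain R Ua where U: "open R" "open Ua" "fst p \<in> R" "snd p \<in> Ua" "\<forall>s\<in>R. \<forall>y\<in>Ua. s *\<^sub>R y \<in> W"
      using assms unfolding lcs_axioms_def by meson
    show "\<forall>\<^sub>F x in at p. fst x *\<^sub>R snd x \<in> W"
      unfolding eventually_at_topological
      by (rule exI[of _ "R \<times> Ua"]) (use U in \<open>auto intro: open_Times simp: mem_Times_iff\<close>)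
  qed
qed

lemma tvs_prod:
  assumes "tvs TYPE('b::{real_vector,t2_space})" "tvs TYPE('c::{real_vector,t2_space})"
  shows "tvs TYPE('b \<times> 'c)"
  unfolding tvs_def
proof safe
  fix p :: "('b \<times> 'c) \<times> ('b \<times> 'c)"
  have i: "((\<lambda>z. z) \<longlongrightarrow> p) (at p)" by (rule tendsto_ident_at)
  have 1: "((\<lambda>z. fst (fst z) + fst (snd z)) \<longlongrightarrow> fst (fst p) + fst (snd p)) (at p)"
    by (intro tvs_add[OF assms(1)] tendsto_fst tendsto_snd i)
  have 2: "((\<lambda>z. snd (fst z) + snd (snd z)) \<longlongrightarrow> snd (fst p) + snd (snd p)) (at p)"
    by (intro tvs_add[OF assms(2)] tendsto_fst tendsto_snd i)
  show "isCont (\<lambda>z::('b \<times> 'c) \<times> ('b \<times> 'c). fst z + snd z) p"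
    unfolding continuous_at using tendsto_Pair[OF 1 2] by (simp add: plus_prod_def)
next
  fix p :: "real \<times> ('b \<times> 'c)"
  have i: "((\<lambda>z. z) \<longlongrightarrow> p) (at p)" by (rule tendsto_ident_at)
  have 1: "((\<lambda>z. fst z *\<^sub>R fst (snd z)) \<longlongrightarrow> fst p *\<^sub>R fst (snd p)) (at p)"
    by (intro tvs_scale[OF assms(1)] tendsto_fst tendsto_snd i)
  have 2: "((\<lambda>z. fst z *\<^sub>R snd (snd z)) \<longlongrightarrow> fst p *\<^sub>R snd (snd p)) (at p)"
    by (intro tvs_scale[OF assms(2)] tendsto_fst tendsto_snd i)
  show "isCont (\<lambda>z::real \<times> ('b \<times> 'c). fst z *\<^sub>R snd z) p"
    unfolding continuous_at using tendsto_Pair[OF 1 2] by (simp add: scaleR_prod_def)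
qed




lemma lcs_open_transl:
  assumes "lcs_axioms TYPE('v::{real_vector,t2_space})" "open (S::'v set)"
  shows "open {y. c + y \<in> S}"
  unfolding open_subopen[of "{y. c + y \<in> S}"]
proof
  fix y assume "y \<in> {y. c + y \<in> S}"
  then obtain Ua Ub where U: "open Ua" "open Ub" "c \<in> Ua" "y \<in> Ub" "\<forall>x\<in>Ua. \<forall>z\<in>Ub. x + z \<in> S"
    using assms unfolding lcs_axioms_def by (metis mem_Collect_eq)
  then show "\<exists>T. open T \<and> y \<in> T \<and> T \<subseteq> {y. c + y \<in> S}" by (intro exI[of _ Ub]) auto
qed

lemma lcs_open_scale:
  assumes "lcs_axioms TYPE('v::{real_vector,t2_space})" "open (S::'v set)"
  shows "open {y. r *\<^sub>R y \<in> S}"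
  unfolding open_subopen[of "{y. r *\<^sub>R y \<in> S}"]
proof
  fix y assume "y \<in> {y. r *\<^sub>R y \<in> S}"
  then obtain R Ua where U: "open R" "open Ua" "r \<in> R" "y \<in> Ua" "\<forall>s\<in>R. \<forall>z\<in>Ua. s *\<^sub>R z \<in> S"
    using assms unfolding lcs_axioms_def by (metis mem_Collect_eq)
  then show "\<exists>T. open T \<and> y \<in> T \<and> T \<subseteq> {y. r *\<^sub>R y \<in> S}" by (intro exI[of _ Ua]) auto
qed

lemma closure_meet:
  assumes "x \<in> closure C" "open S" "x \<in> S"
  shows "\<exists>a\<in>C. a \<in> S"
  using assms unfolding closure_iff_nhds_not_empty by blast

lemma lcs_closure_convex:
  assumes "lcs_axioms TYPE('v::{real_vector,t2_space})" "convex (C::'v set)"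
  shows "convex (closure C)"
proof (rule convexI)
  fix x y :: 'v and u v :: real
  assume xy: "x \<in> closure C" "y \<in> closure C" "0 \<le> u" "0 \<le> v" "u + v = 1"
  show "u *\<^sub>R x + v *\<^sub>R y \<in> closure C"
    unfolding closure_iff_nhds_not_empty
  proof (intro allI impI)
    fix A S assume S: "S \<subseteq> A" "open S" "u *\<^sub>R x + v *\<^sub>R y \<in> S"
    then obtain Ua Ub where U: "open Ua" "open Ub" "u *\<^sub>R x \<in> Ua" "v *\<^sub>R y \<in> Ub"
      "\<forall>a\<in>Ua. \<forall>b\<in>Ub. a + b \<in> S"
      using assms(1) unfolding lcs_axioms_def by meson
    obtain a where a: "a \<in> C" "u *\<^sub>R a \<in> Ua"
      using closure_meet[OF xy(1) lcs_open_scale[OF assms(1) U(1), of u]] U(3) by auto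
    obtain b where b: "b \<in> C" "v *\<^sub>R b \<in> Ub"
      using closure_meet[OF xy(2) lcs_open_scale[OF assms(1) U(2), of v]] U(4) by auto
    have "u *\<^sub>R a + v *\<^sub>R b \<in> C" using assms(2) a b xy by (simp add: convexD)
    moreover have "u *\<^sub>R a + v *\<^sub>R b \<in> S" using U a b by blast
    ultimately show "C \<inter> A \<noteq> {}" using S by blast
  qed
qed

lemma lcs_nbhd:
  assumes "lcs_axioms TYPE('v::{real_vector,t2_space})" "open E" "(L::'v) \<in> E"
  shows "\<exists>W. open W \<and> convex W \<and> 0 \<in> W \<and> (\<forall>z\<in>closure W. L + z \<in> E)"
proof -
  let ?E0 = "{y. L + y \<in> E}"
  have "open ?E0" by (rule lcs_open_transl[OF assms(1,2)])
  have "0 + 0 \<in> ?E0" using assms by simp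
  then obtain Ua Ub where U: "open Ua" "open Ub" "0 \<in> Ua" "0 \<in> Ub" "\<forall>a\<in>Ua. \<forall>b\<in>Ub. a + b \<in> ?E0"
    using assms(1) \<open>open ?E0\<close> unfolding lcs_axioms_def by meson
  then obtain W where W: "open W" "convex W" "0 \<in> W" "W \<subseteq> Ua \<inter> Ub"
    using assms(1) unfolding lcs_axioms_def by (metis IntI open_Int)
  have "\<forall>z\<in>closure W. L + z \<in> E"
  proof
    fix z assume z: "z \<in> closure W"
    let ?S = "{y. (-1) *\<^sub>R y \<in> {w. z + w \<in> Ub}}"
    have "open ?S" by (intro lcs_open_scale lcs_open_transl assms(1) U(2))
    moreover have "z \<in> ?S" using U(4) by simp
    ultimately obtain y where y: "y \<in> W" "y \<in> ?S" using closure_meet[OF z] by blast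
    have "z - y \<in> Ub" using y by simp
    moreover have "y \<in> Ua" using W y by blast
    ultimately have "y + (z - y) \<in> ?E0" using U(5) by blast
    then show "L + z \<in> E" by simp
  qed
  then show ?thesis using W by blast
qed

lemma mvt:
  fixes \<psi> :: "real \<Rightarrow> 'v::{real_vector,t2_space}"
  assumes lcs: "lcs_axioms TYPE('v)" and C: "convex C" "open C"
    and der: "\<forall>\<tau>\<in>{0..1}. ((\<lambda>\<sigma>. (1/\<sigma>) *\<^sub>R (\<psi> (\<tau>+\<sigma>) - \<psi> \<tau>)) \<longlongrightarrow> d \<tau>) (at 0)"
    and dC: "\<forall>\<tau>\<in>{0..1}. d \<tau> \<in> C"
  shows "\<psi> 1 - \<psi> 0 \<in> closure C"
proof -
  have tv: "tvs TYPE('v)" by (rule lcs_tvs[OF lcs])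
  define K where "K = closure C"
  have Kc: "convex K" unfolding K_def by (rule lcs_closure_convex[OF lcs C(1)])
  have Kcl: "closed K" unfolding K_def by simp
  have CK: "C \<subseteq> K" unfolding K_def by (rule closure_subset)
  have Kne: "K \<noteq> {}" using dC CK by force
  define S where "S = {\<tau>\<in>{0..1}. \<forall>\<sigma>\<in>{0..\<tau>}. \<psi> \<sigma> - \<psi> 0 \<in> (\<lambda>k. \<sigma> *\<^sub>R k) ` K}"
  have zero: "\<psi> 0 - \<psi> 0 \<in> (\<lambda>k. 0 *\<^sub>R k) ` K" using Kne by auto
  have "\<forall>\<sigma>\<in>{0..0::real}. \<psi> \<sigma> - \<psi> 0 \<in> (\<lambda>k. \<sigma> *\<^sub>R k) ` K" using zero by auto
  then have S0: "0 \<in> S" unfolding S_def by simp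
  have Sb: "bdd_above S" by (rule bdd_aboveI[of _ 1]) (auto simp: S_def)
  define T where "T = Sup S"
  have T0: "0 \<le> T" unfolding T_def using S0 Sb by (meson cSup_upper)
  have Sne: "S \<noteq> {}" using S0 by blast
  have T1: "T \<le> 1" unfolding T_def by (rule cSup_least[OF Sne]) (simp add: S_def)
  have cont: "((\<lambda>s. \<psi> s) \<longlongrightarrow> \<psi> \<tau>) (at \<tau>)" if "\<tau> \<in> {0..1}" for \<tau>
  proof -
    have q: "((\<lambda>\<sigma>. (1/\<sigma>) *\<^sub>R (\<psi> (\<tau>+\<sigma>) - \<psi> \<tau>)) \<longlongrightarrow> d \<tau>) (at 0)" using der that by blast
    have "((\<lambda>\<sigma>. \<sigma> *\<^sub>R ((1/\<sigma>) *\<^sub>R (\<psi> (\<tau>+\<sigma>) - \<psi> \<tau>))) \<longlongrightarrow> 0 *\<^sub>R d \<tau>) (at 0)"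
      by (rule tvs_scale[OF tv _ q]) (rule tendsto_ident_at)
    then have "((\<lambda>\<sigma>. \<sigma> *\<^sub>R ((1/\<sigma>) *\<^sub>R (\<psi> (\<tau>+\<sigma>) - \<psi> \<tau>))) \<longlongrightarrow> 0) (at 0)" by simp
    then have "((\<lambda>\<sigma>. \<psi> (\<tau>+\<sigma>) - \<psi> \<tau>) \<longlongrightarrow> 0) (at 0)"
      by (rule Lim_transform_eventually) (auto simp: eventually_at_filter)
    then have "((\<lambda>\<sigma>. (\<psi> (\<tau>+\<sigma>) - \<psi> \<tau>) + \<psi> \<tau>) \<longlongrightarrow> 0 + \<psi> \<tau>) (at 0)"
      by (intro tvs_add[OF tv] tendsto_const)
    then have "((\<lambda>\<sigma>. \<psi> (\<tau>+\<sigma>)) \<longlongrightarrow> \<psi> \<tau>) (at 0)" by simp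
    then show ?thesis by (subst LIM_offset_zero_iff) auto
  qed
  have claim1: "\<psi> \<sigma> - \<psi> 0 \<in> (\<lambda>k. \<sigma> *\<^sub>R k) ` K" if "0 \<le> \<sigma>" "\<sigma> < T" for \<sigma>
  proof -
    have "\<sigma> < Sup S" using that T_def by simp
    then obtain x where "x \<in> S" "\<sigma> < x" using less_cSup_iff[OF Sne Sb, of \<sigma>] by blast
    then show ?thesis using that unfolding S_def by auto
  qed
  have claim2: "\<psi> T - \<psi> 0 \<in> (\<lambda>k. T *\<^sub>R k) ` K"
  proof (cases "T = 0")
    case True then show ?thesis using zero by simp
  next
    case False
    then have Tp: "T > 0" using T0 by simp
    define \<phi> where "\<phi> \<sigma> = (1/\<sigma>) *\<^sub>R (\<psi> \<sigma> - \<psi> 0)" for \<sigma>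
    have "((\<lambda>\<sigma>. 1/\<sigma>) \<longlongrightarrow> 1/T) (at T)" using Tp by (intro tendsto_intros) auto
    then have l: "(\<phi> \<longlongrightarrow> \<phi> T) (at T)" unfolding \<phi>_def
      by (intro tvs_scale[OF tv] tvs_diff[OF tv] tendsto_const cont) (use T0 T1 in auto)
    have "eventually (\<lambda>\<sigma>. \<sigma> \<in> {0<..<T}) (at_left T)" using Tp by (rule eventually_at_left_real)
    then have ev: "eventually (\<lambda>\<sigma>. \<phi> \<sigma> \<in> K) (at_left T)"
    proof (rule eventually_mono)
      fix \<sigma> assume s: "\<sigma> \<in> {0<..<T}"
      then obtain k where "k \<in> K" "\<psi> \<sigma> - \<psi> 0 = \<sigma> *\<^sub>R k" using claim1[of \<sigma>] by auto
      then show "\<phi> \<sigma> \<in> K" unfolding \<phi>_def using s by auto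
    qed
    have "\<phi> T \<in> K"
      by (rule Lim_in_closed_set[OF Kcl ev]) (use l in \<open>auto intro: tendsto_mono[OF at_le]\<close>)
    moreover have "\<psi> T - \<psi> 0 = T *\<^sub>R \<phi> T" unfolding \<phi>_def using Tp by simp
    ultimately show ?thesis by blast
  qed
  have TS: "T \<in> S" unfolding S_def using T0 T1 claim1 claim2
    by (auto simp: order.order_iff_strict)
  have "T = 1"
  proof (rule ccontr)
    assume "T \<noteq> 1"
    then have T1': "T < 1" using T1 by simp
    have "eventually (\<lambda>\<sigma>. (1/\<sigma>) *\<^sub>R (\<psi> (T+\<sigma>) - \<psi> T) \<in> C) (at 0)"
      using topological_tendstoD[OF der[rule_format] C(2) dC[rule_format]] T0 T1 by simp
    then obtain \<epsilon> where \<epsilon>: "\<epsilon> > 0" "\<forall>\<sigma>. \<sigma> \<noteq> 0 \<and> dist \<sigma> 0 < \<epsilon> \<longrightarrow> (1/\<sigma>) *\<^sub>R (\<psi> (T+\<sigma>) - \<psi> T) \<in> C"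
      unfolding eventually_at by auto
    define s where "s = min (\<epsilon>/2) (1 - T)"
    have s: "s > 0" "s < \<epsilon>" "T + s \<le> 1" unfolding s_def using \<epsilon> T1' by auto
    have "T + s \<in> S" unfolding S_def
    proof (safe)
      show "T + s \<in> {0..1}" using s T0 by auto
    next
      fix \<sigma> assume \<sigma>: "\<sigma> \<in> {0..T+s}"
      show "\<psi> \<sigma> - \<psi> 0 \<in> (\<lambda>k. \<sigma> *\<^sub>R k) ` K"
      proof (cases "\<sigma> \<le> T")
        case True then show ?thesis using TS \<sigma> unfolding S_def by auto
      next
        case False
        define r where "r = \<sigma> - T"
        have r: "r > 0" "r < \<epsilon>" "\<sigma> = T + r" using False \<sigma> s unfolding r_def by auto
        define q where "q = (1/r) *\<^sub>R (\<psi> (T+r) - \<psi> T)"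
        have qK: "q \<in> K" using \<epsilon>(2)[rule_format, of r] r CK unfolding q_def by auto
        obtain k where k: "k \<in> K" "\<psi> T - \<psi> 0 = T *\<^sub>R k" using claim2 by auto
        have sp: "\<sigma> > 0" using r T0 by simp
        have cm: "(r/\<sigma>) *\<^sub>R q + (T/\<sigma>) *\<^sub>R k \<in> K"
          using Kc qK k(1) r T0 sp by (intro convexD) (auto simp: add_divide_distrib[symmetric])
        have rq: "r *\<^sub>R q = \<psi> (T+r) - \<psi> T" using r unfolding q_def by simp
        have "\<psi> \<sigma> - \<psi> 0 = (\<psi> (T+r) - \<psi> T) + (\<psi> T - \<psi> 0)" using r by simp
        also have "\<dots> = r *\<^sub>R q + T *\<^sub>R k" using rq k by simp
        also have "\<dots> = \<sigma> *\<^sub>R ((r/\<sigma>) *\<^sub>R q + (T/\<sigma>) *\<^sub>R k)" using sp by (simp add: scaleR_add_right)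
        finally show ?thesis using cm by blast
      qed
    qed
    then have "T + s \<le> T" unfolding T_def using Sb by (rule cSup_upper)
    then show False using s by simp
  qed
  then have "\<forall>\<sigma>\<in>{0..1}. \<psi> \<sigma> - \<psi> 0 \<in> (\<lambda>k. \<sigma> *\<^sub>R k) ` K" using TS unfolding S_def by blast
  then have "\<psi> 1 - \<psi> 0 \<in> (\<lambda>k. 1 *\<^sub>R k) ` K" by (drule_tac x=1 in bspec) auto
  then have "\<psi> 1 - \<psi> 0 \<in> K" by (simp add: image_def)
  then show ?thesis unfolding K_def .
qed




lemma tvs_segment_nbhd:
  fixes p0 u0 :: "'w::{real_vector,t2_space}"
  assumes tw: "tvs TYPE('w)" and N: "open N" "p0 \<in> N"
  shows "\<exists>P \<delta> Q. open P \<and> p0 \<in> P \<and> \<delta> > 0 \<and> open Q \<and> u0 \<in> Q \<and>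
           (\<forall>p\<in>P. \<forall>s. \<bar>s\<bar> < \<delta> \<longrightarrow> (\<forall>u\<in>Q. p + s *\<^sub>R u \<in> N))"
proof -
  let ?z = "(p0, (0::real, u0))"
  have i: "((\<lambda>z. z) \<longlongrightarrow> ?z) (nhds ?z)" by (rule filterlim_ident)
  have "((\<lambda>z. fst z + fst (snd z) *\<^sub>R snd (snd z)) \<longlongrightarrow> p0 + 0 *\<^sub>R u0) (nhds ?z)"
  proof -
    have c1: "((\<lambda>z. fst z) \<longlongrightarrow> p0) (nhds ?z)" using tendsto_fst[OF i] by simp
    have c2: "((\<lambda>z. fst (snd z)) \<longlongrightarrow> 0) (nhds ?z)" using tendsto_fst[OF tendsto_snd[OF i]] by simp
    have c3: "((\<lambda>z. snd (snd z)) \<longlongrightarrow> u0) (nhds ?z)" using tendsto_snd[OF tendsto_snd[OF i]] by simp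
    show ?thesis by (intro tvs_add[OF tw] tvs_scale[OF tw] c1 c2 c3)
  qed
  then have "eventually (\<lambda>z. fst z + fst (snd z) *\<^sub>R snd (snd z) \<in> N) (nhds ?z)"
    using N by (intro topological_tendstoD) auto
  then obtain S where S: "open S" "?z \<in> S" "\<forall>z\<in>S. fst z + fst (snd z) *\<^sub>R snd (snd z) \<in> N"
    unfolding eventually_nhds by blast
  obtain P B where PB: "open P" "open B" "?z \<in> P \<times> B" "P \<times> B \<subseteq> S" using open_prod_elim[OF S(1,2)] by blast
  obtain R Q where RQ: "open R" "open Q" "(0::real, u0) \<in> R \<times> Q" "R \<times> Q \<subseteq> B"
    using open_prod_elim[OF PB(2)] PB(3) by blast
  obtain \<delta> where d: "\<delta> > 0" "ball 0 \<delta> \<subseteq> R" proof -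
    have "0 \<in> R" using RQ(3) by simp
    from openE[OF RQ(1) this] show ?thesis using that by blast
  qed
  have "\<forall>p\<in>P. \<forall>s. \<bar>s\<bar> < \<delta> \<longrightarrow> (\<forall>u\<in>Q. p + s *\<^sub>R u \<in> N)"
  proof (intro ballI allI impI)
    fix p s u
    assume a: "p \<in> P" "\<bar>s\<bar> < \<delta>" "u \<in> Q"
    have "s \<in> ball 0 \<delta>" using a(2) by (simp add: dist_real_def)
    then have "s \<in> R" using d(2) by blast
    then have "(s, u) \<in> B" using RQ(4) a(3) by blast
    then have "(p, (s, u)) \<in> S" using PB(4) a(1) by blast
    from S(3)[rule_format, OF this] show "p + s *\<^sub>R u \<in> N" by simp
  qed
  moreover have "p0 \<in> P" "u0 \<in> Q" using PB(3) RQ(3) by auto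
  ultimately show ?thesis using PB(1) RQ(2) d(1) by blast
qed

lemma ul:
  fixes G :: "'w::{real_vector,t2_space} \<Rightarrow> 'v::{real_vector,t2_space}"
    and h :: "'b \<Rightarrow> real" and p u :: "'b \<Rightarrow> 'w"
  assumes lcs: "lcs_axioms TYPE('v)" and tw: "tvs TYPE('w)" and U: "open U" "p0 \<in> U"
    and hd: "\<forall>q\<in>U. \<forall>\<eta>. ((\<lambda>\<sigma>. (1/\<sigma>) *\<^sub>R (G (q + \<sigma> *\<^sub>R \<eta>) - G q)) \<longlongrightarrow> G' q \<eta>) (at 0)"
    and hc: "\<forall>E. open E \<and> G' p0 u0 \<in> E \<longrightarrow> (\<exists>Np Nu. open Np \<and> open Nu \<and> p0 \<in> Np \<and> u0 \<in> Nu \<and>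
               (\<forall>p\<in>Np \<inter> U. \<forall>u\<in>Nu. G' p u \<in> E))"
    and hF: "(h \<longlongrightarrow> 0) F" "eventually (\<lambda>x. h x \<noteq> 0) F" "(p \<longlongrightarrow> p0) F" "(u \<longlongrightarrow> u0) F"
  shows "((\<lambda>x. (1 / h x) *\<^sub>R (G (p x + h x *\<^sub>R u x) - G (p x))) \<longlongrightarrow> G' p0 u0) F"
proof (rule topological_tendstoI)
  have tv: "tvs TYPE('v)" by (rule lcs_tvs[OF lcs])
  fix E assume E: "open E" "G' p0 u0 \<in> E"
  define L where "L = G' p0 u0"
  obtain W where W: "open W" "convex W" "0 \<in> W" "\<forall>z\<in>closure W. L + z \<in> E"
    using lcs_nbhd[OF lcs E] unfolding L_def by blast
  have "open {y. (-L) + y \<in> W}" by (rule lcs_open_transl[OF lcs W(1)])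
  moreover have "L \<in> {y. (-L) + y \<in> W}" using W by simp
  ultimately have "\<exists>Np Nu. open Np \<and> open Nu \<and> p0 \<in> Np \<and> u0 \<in> Nu \<and>
               (\<forall>p\<in>Np \<inter> U. \<forall>u\<in>Nu. G' p u \<in> {y. (-L) + y \<in> W})"
    unfolding L_def by (intro hc[rule_format] conjI)
  then obtain Np Nu where NN: "open Np" "open Nu" "p0 \<in> Np" "u0 \<in> Nu"
    "\<forall>p\<in>Np \<inter> U. \<forall>u\<in>Nu. (-L) + G' p u \<in> W"
    by auto
  obtain P \<delta> Q where PQ: "open P" "p0 \<in> P" "\<delta> > 0" "open Q" "u0 \<in> Q"
    "\<forall>p\<in>P. \<forall>s. \<bar>s\<bar> < \<delta> \<longrightarrow> (\<forall>u\<in>Q. p + s *\<^sub>R u \<in> Np \<inter> U)"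
    using tvs_segment_nbhd[OF tw open_Int[OF NN(1) U(1)], of p0 u0] NN(3) U(2) by blast
  have ev1: "eventually (\<lambda>x. h x \<in> ball 0 \<delta>) F" using hF(1) PQ(3) by (intro topological_tendstoD) auto
  have ev2: "eventually (\<lambda>x. p x \<in> P) F" using hF(3) PQ by (intro topological_tendstoD) auto
  have ev3: "eventually (\<lambda>x. u x \<in> Q \<inter> Nu) F" using hF(4) PQ NN by (intro topological_tendstoD) auto
  show "eventually (\<lambda>x. (1 / h x) *\<^sub>R (G (p x + h x *\<^sub>R u x) - G (p x)) \<in> E) F"
    using ev1 ev2 ev3 hF(2)
  proof eventually_elim
    case (elim x)
    define hh where "hh = h x"
    define pp where "pp = p x"
    define uu where "uu = u x"
    have hh: "\<bar>hh\<bar> < \<delta>" "hh \<noteq> 0" using elim unfolding hh_def by (auto simp: dist_real_def)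
    have pp: "pp \<in> P" and uu: "uu \<in> Q" "uu \<in> Nu" using elim unfolding pp_def uu_def by auto
    define q where "q \<tau> = pp + (\<tau> * hh) *\<^sub>R uu" for \<tau>
    have qN: "q \<tau> \<in> Np \<inter> U" if "\<tau> \<in> {0..1}" for \<tau>
    proof -
      have "\<bar>\<tau> * hh\<bar> = \<tau> * \<bar>hh\<bar>" using that by (simp add: abs_mult)
      also have "\<dots> \<le> 1 * \<bar>hh\<bar>" using that by (intro mult_right_mono) auto
      finally have "\<bar>\<tau> * hh\<bar> < \<delta>" using hh by simp
      then show ?thesis unfolding q_def using PQ(6) pp uu by blast
    qed
    define \<psi> where "\<psi> \<tau> = (1/hh) *\<^sub>R (G (q \<tau>) - G pp) - \<tau> *\<^sub>R L" for \<tau>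
    define d where "d \<tau> = G' (q \<tau>) uu - L" for \<tau>
    have dW: "\<forall>\<tau>\<in>{0..1}. d \<tau> \<in> W"
    proof
      fix \<tau> :: real assume "\<tau> \<in> {0..1}"
      then have "(-L) + G' (q \<tau>) uu \<in> W" using NN(5) qN uu by blast
      moreover have "d \<tau> = (-L) + G' (q \<tau>) uu" unfolding d_def by simp
      ultimately show "d \<tau> \<in> W" by simp
    qed
    have der: "\<forall>\<tau>\<in>{0..1}. ((\<lambda>\<sigma>. (1/\<sigma>) *\<^sub>R (\<psi> (\<tau>+\<sigma>) - \<psi> \<tau>)) \<longlongrightarrow> d \<tau>) (at 0)"
    proof
      fix \<tau> :: real assume \<tau>: "\<tau> \<in> {0..1}"
      have lim1: "((\<lambda>\<sigma>. (1/\<sigma>) *\<^sub>R (G (q \<tau> + \<sigma> *\<^sub>R uu) - G (q \<tau>))) \<longlongrightarrow> G' (q \<tau>) uu) (at 0)"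
        using hd qN[OF \<tau>] by blast
      have fl: "filterlim (\<lambda>\<sigma>. hh * \<sigma>) (at 0) (at 0)"
        unfolding filterlim_at
      proof
        show "eventually (\<lambda>\<sigma>. hh * \<sigma> \<in> UNIV \<and> hh * \<sigma> \<noteq> 0) (at (0::real))"
          using hh by (auto simp: eventually_at_filter)
        show "((\<lambda>\<sigma>. hh * \<sigma>) \<longlongrightarrow> 0) (at (0::real))"
          by (rule tendsto_mult_right_zero) (rule tendsto_ident_at)
      qed
      have lim2: "((\<lambda>\<sigma>. (1/(hh*\<sigma>)) *\<^sub>R (G (q \<tau> + (hh*\<sigma>) *\<^sub>R uu) - G (q \<tau>))) \<longlongrightarrow> G' (q \<tau>) uu) (at 0)"
        using filterlim_compose[OF lim1 fl] .
      have lim3: "((\<lambda>\<sigma>. (1/(hh*\<sigma>)) *\<^sub>R (G (q \<tau> + (hh*\<sigma>) *\<^sub>R uu) - G (q \<tau>)) - L) \<longlongrightarrow> d \<tau>) (at 0)"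
        unfolding d_def by (intro tvs_diff[OF tv] lim2 tendsto_const)
      show "((\<lambda>\<sigma>. (1/\<sigma>) *\<^sub>R (\<psi> (\<tau>+\<sigma>) - \<psi> \<tau>)) \<longlongrightarrow> d \<tau>) (at 0)"
      proof (rule Lim_transform_eventually[OF lim3])
        show "eventually (\<lambda>\<sigma>. (1/(hh*\<sigma>)) *\<^sub>R (G (q \<tau> + (hh*\<sigma>) *\<^sub>R uu) - G (q \<tau>)) - L =
                 (1/\<sigma>) *\<^sub>R (\<psi> (\<tau>+\<sigma>) - \<psi> \<tau>)) (at 0)"
          unfolding eventually_at_filter
        proof (intro always_eventually allI impI)
          fix \<sigma> :: real assume s: "\<sigma> \<noteq> 0"
          have qq: "q (\<tau> + \<sigma>) = q \<tau> + (hh*\<sigma>) *\<^sub>R uu"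
            unfolding q_def by (simp add: algebra_simps)
          have "\<psi> (\<tau>+\<sigma>) - \<psi> \<tau> = (1/hh) *\<^sub>R (G (q \<tau> + (hh*\<sigma>) *\<^sub>R uu) - G (q \<tau>)) - \<sigma> *\<^sub>R L"
            unfolding \<psi>_def qq by (simp add: scaleR_diff_right scaleR_add_left algebra_simps)
          then have "(1/\<sigma>) *\<^sub>R (\<psi> (\<tau>+\<sigma>) - \<psi> \<tau>) =
              ((1/\<sigma>) * (1/hh)) *\<^sub>R (G (q \<tau> + (hh*\<sigma>) *\<^sub>R uu) - G (q \<tau>)) - ((1/\<sigma>) * \<sigma>) *\<^sub>R L"
            by (simp add: scaleR_diff_right)
          also have "\<dots> = (1/(hh*\<sigma>)) *\<^sub>R (G (q \<tau> + (hh*\<sigma>) *\<^sub>R uu) - G (q \<tau>)) - L"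
            using s by (simp add: mult.commute)
          finally show "(1/(hh*\<sigma>)) *\<^sub>R (G (q \<tau> + (hh*\<sigma>) *\<^sub>R uu) - G (q \<tau>)) - L =
                 (1/\<sigma>) *\<^sub>R (\<psi> (\<tau>+\<sigma>) - \<psi> \<tau>)" by simp
        qed
      qed
    qed
    have "\<psi> 1 - \<psi> 0 \<in> closure W" by (rule mvt[OF lcs W(2,1) der dW])
    moreover have "\<psi> 1 - \<psi> 0 = (1/hh) *\<^sub>R (G (pp + hh *\<^sub>R uu) - G pp) - L"
      unfolding \<psi>_def q_def by simp
    ultimately have "(1/hh) *\<^sub>R (G (pp + hh *\<^sub>R uu) - G pp) - L \<in> closure W" by simp
    then have "L + ((1/hh) *\<^sub>R (G (pp + hh *\<^sub>R uu) - G pp) - L) \<in> E" using W(4) by blast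
    then show ?case unfolding hh_def pp_def uu_def by simp
  qed
qed




lemma cm_tendsto:
  assumes cm: "cont_multi U j \<Phi>" and v: "v \<in> U" and xs: "length xs = j"
    and p: "(p \<longlongrightarrow> v) F" and pU: "eventually (\<lambda>x. p x \<in> U) F"
    and ysl: "eventually (\<lambda>x. length (ys x) = j) F"
    and ys: "\<forall>m<j. ((\<lambda>x. ys x ! m) \<longlongrightarrow> xs ! m) F"
  shows "((\<lambda>x. \<Phi> (p x) (ys x)) \<longlongrightarrow> \<Phi> v xs) F"
proof (rule topological_tendstoI)
  fix W assume W: "open W" "\<Phi> v xs \<in> W"
  have "\<exists>N Ns. open N \<and> v \<in> N \<and> length Ns = j \<and> (\<forall>i<j. open (Ns ! i) \<and> xs ! i \<in> Ns ! i) \<and>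
    (\<forall>v'\<in>N \<inter> U. \<forall>ys. length ys = j \<and> (\<forall>i<j. ys ! i \<in> Ns ! i) \<longrightarrow> \<Phi> v' ys \<in> W)"
    using cm v xs W unfolding cont_multi_def by blast
  then obtain N Ns where NN: "open N" "v \<in> N" "length Ns = j" "\<forall>i<j. open (Ns ! i) \<and> xs ! i \<in> Ns ! i"
    "\<forall>v'\<in>N \<inter> U. \<forall>ys. length ys = j \<and> (\<forall>i<j. ys ! i \<in> Ns ! i) \<longrightarrow> \<Phi> v' ys \<in> W"
    by blast
  have e1: "eventually (\<lambda>x. p x \<in> N) F" using p NN by (intro topological_tendstoD) auto
  have "\<forall>m\<in>{..<j}. eventually (\<lambda>x. ys x ! m \<in> Ns ! m) F"
    using ys NN(4) by (auto intro: topological_tendstoD)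
  then have e2: "eventually (\<lambda>x. \<forall>m\<in>{..<j}. ys x ! m \<in> Ns ! m) F"
    by (intro eventually_ball_finite) auto
  show "eventually (\<lambda>x. \<Phi> (p x) (ys x) \<in> W) F"
    using e1 e2 pU ysl
  proof eventually_elim
    case (elim x) then show ?case using NN(5) by auto
  qed
qed

definition slin :: "('w::real_vector list \<Rightarrow> 'v::real_vector) \<Rightarrow> nat \<Rightarrow> bool" where
  "slin \<Phi> i \<longleftrightarrow> (\<forall>l<i. \<forall>xs a b r. length xs = i \<longrightarrow>
      \<Phi> (xs[l := a + b]) = \<Phi> (xs[l := a]) + \<Phi> (xs[l := b]) \<and> \<Phi> (xs[l := r *\<^sub>R a]) = r *\<^sub>R \<Phi> (xs[l := a]))"

lemma scaleR_diff_telescope: "r *\<^sub>R (A - B) + r *\<^sub>R (B - C) = r *\<^sub>R (A - (C::'a::real_vector))"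
  by (simp add: algebra_simps)

locale dfam =
  fixes U :: "'w::{real_vector,t2_space} set"
    and D :: "nat \<Rightarrow> 'w \<Rightarrow> 'w list \<Rightarrow> 'v::{real_vector,t2_space}"
    and k :: nat
  assumes lcs: "lcs_axioms TYPE('v)" and tw: "tvs TYPE('w)" and U: "open U"
    and hD: "\<forall>j<k. \<forall>v\<in>U. \<forall>xs \<eta>. length xs = j \<longrightarrow>
        ((\<lambda>t::real. (1 / t) *\<^sub>R (D j (v + t *\<^sub>R \<eta>) xs - D j v xs)) \<longlongrightarrow> D (Suc j) v (xs @ [\<eta>])) (at 0)"
    and hC: "\<forall>j\<le>k. cont_multi U j (D j)"
begin

lemma tv: "tvs TYPE('v)" by (rule lcs_tvs[OF lcs])

lemma hc_slot:
  assumes "i < k" "v \<in> U" "length ys = i"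
  shows "\<forall>E. open E \<and> D (Suc i) v (ys @ [u0]) \<in> E \<longrightarrow> (\<exists>Np Nu. open Np \<and> open Nu \<and> v \<in> Np \<and> u0 \<in> Nu \<and>
               (\<forall>p\<in>Np \<inter> U. \<forall>u\<in>Nu. D (Suc i) p (ys @ [u]) \<in> E))"
proof (intro allI impI)
  fix E assume E: "open E \<and> D (Suc i) v (ys @ [u0]) \<in> E"
  have cm: "cont_multi U (Suc i) (D (Suc i))" using hC assms(1) by simp
  obtain N Ns where NN: "open N" "v \<in> N" "length Ns = Suc i" "\<forall>m<Suc i. open (Ns ! m) \<and> (ys @ [u0]) ! m \<in> Ns ! m"
    "\<forall>v'\<in>N \<inter> U. \<forall>zs. length zs = Suc i \<and> (\<forall>m<Suc i. zs ! m \<in> Ns ! m) \<longrightarrow> D (Suc i) v' zs \<in> E"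
    using cm assms E unfolding cont_multi_def by (metis length_append_singleton)
  have "\<forall>p\<in>N \<inter> U. \<forall>u\<in>Ns ! i. D (Suc i) p (ys @ [u]) \<in> E"
  proof (intro ballI)
    fix p u assume pu: "p \<in> N \<inter> U" "u \<in> Ns ! i"
    have "\<forall>m<Suc i. (ys @ [u]) ! m \<in> Ns ! m"
    proof (intro allI impI)
      fix m assume m: "m < Suc i"
      show "(ys @ [u]) ! m \<in> Ns ! m"
      proof (cases "m < i")
        case True
        have "(ys @ [u0]) ! m \<in> Ns ! m" using NN(4) m by blast
        then show ?thesis using True assms(3) by (simp add: nth_append)
      next
        case False then have "m = i" using m by simp
        then show ?thesis using pu assms(3) by (simp add: nth_append)
      qed
    qed
    then show "D (Suc i) p (ys @ [u]) \<in> E" using NN(5) pu assms(3) by simp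
  qed
  moreover have "u0 \<in> Ns ! i" using NN(4) assms(3) by (metis lessI nth_append_length)
  moreover have "open (Ns ! i)" using NN(4) by simp
  ultimately show "\<exists>Np Nu. open Np \<and> open Nu \<and> v \<in> Np \<and> u0 \<in> Nu \<and>
               (\<forall>p\<in>Np \<inter> U. \<forall>u\<in>Nu. D (Suc i) p (ys @ [u]) \<in> E)"
    using NN(1,2) by blast
qed

lemma ul_D:
  fixes h :: "'b \<Rightarrow> real" and p u :: "'b \<Rightarrow> 'w"
  assumes "i < k" "v \<in> U" "length ys = i"
    and "(h \<longlongrightarrow> 0) F" "eventually (\<lambda>x. h x \<noteq> 0) F" "(p \<longlongrightarrow> v) F" "(u \<longlongrightarrow> u0) F"
  shows "((\<lambda>x. (1 / h x) *\<^sub>R (D i (p x + h x *\<^sub>R u x) ys - D i (p x) ys)) \<longlongrightarrow> D (Suc i) v (ys @ [u0])) F"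
proof -
  have hd: "\<forall>q\<in>U. \<forall>\<eta>. ((\<lambda>\<sigma>. (1/\<sigma>) *\<^sub>R (D i (q + \<sigma> *\<^sub>R \<eta>) ys - D i q ys)) \<longlongrightarrow> D (Suc i) q (ys @ [\<eta>])) (at 0)"
    using hD assms(1,3) by blast
  show ?thesis
    by (rule ul[where G="\<lambda>q. D i q ys" and G'="\<lambda>q \<eta>. D (Suc i) q (ys @ [\<eta>])" and U=U,
          OF lcs tw U assms(2) hd hc_slot[OF assms(1-3)] assms(4-7)])
qed

lemma ev_line: "v \<in> U \<Longrightarrow> eventually (\<lambda>t::real. v + t *\<^sub>R \<eta> \<in> U) (at 0)"
proof -
  assume v: "v \<in> U"
  have "((\<lambda>t::real. v + t *\<^sub>R \<eta>) \<longlongrightarrow> v + 0 *\<^sub>R \<eta>) (at 0)"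
    by (intro tvs_add[OF tw] tvs_scale[OF tw] tendsto_const tendsto_ident_at)
  then show ?thesis using U v by (intro topological_tendstoD) auto
qed

lemma lin: "i \<le> k \<Longrightarrow> v \<in> U \<Longrightarrow> slin (D i v) i"
proof (induction i arbitrary: v)
  case 0 then show ?case by (simp add: slin_def)
next
  case (Suc m)
  have mk: "m < k" using Suc by simp
  show ?case unfolding slin_def
  proof (intro allI impI)
    fix l :: nat and xs :: "'w list" and a b :: 'w and r :: real
    assume l: "l < Suc m" and xs: "length xs = Suc m"
    obtain ys \<eta> where xe: "xs = ys @ [\<eta>]" and ys: "length ys = m"
      using xs by (metis length_Suc_conv_rev)
    have v: "v \<in> U" using Suc by simp
    define Q where "Q zs t = (1/t) *\<^sub>R (D m (v + t *\<^sub>R \<eta>) zs - D m v zs)" for zs t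
    have Qlim: "(Q zs \<longlongrightarrow> D (Suc m) v (zs @ [\<eta>])) (at 0)" if "length zs = m" for zs
      unfolding Q_def using hD mk v that by blast
    have nb: "at (0::real) \<noteq> bot" by simp
    show "D (Suc m) v (xs[l := a + b]) = D (Suc m) v (xs[l := a]) + D (Suc m) v (xs[l := b]) \<and>
          D (Suc m) v (xs[l := r *\<^sub>R a]) = r *\<^sub>R D (Suc m) v (xs[l := a])"
    proof (cases "l < m")
      case True
      have upd: "xs[l := c] = ys[l := c] @ [\<eta>]" for c using xe ys True by (simp add: list_update_append)
      have IH: "slin (D m w) m" if "w \<in> U" for w using Suc.IH[of w] Suc.prems that by simp
      have ev: "eventually (\<lambda>t. v + t *\<^sub>R \<eta> \<in> U) (at (0::real))" by (rule ev_line[OF v])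
      have add: "D (Suc m) v (ys[l := a + b] @ [\<eta>]) = D (Suc m) v (ys[l := a] @ [\<eta>]) + D (Suc m) v (ys[l := b] @ [\<eta>])"
      proof (rule tendsto_unique[OF nb Qlim])
        show "length (ys[l := a + b]) = m" using ys by simp
        have "((\<lambda>t. Q (ys[l := a]) t + Q (ys[l := b]) t) \<longlongrightarrow> D (Suc m) v (ys[l := a] @ [\<eta>]) + D (Suc m) v (ys[l := b] @ [\<eta>])) (at 0)"
          by (intro tvs_add[OF tv] Qlim) (use ys in auto)
        then show "(Q (ys[l := a + b]) \<longlongrightarrow> D (Suc m) v (ys[l := a] @ [\<eta>]) + D (Suc m) v (ys[l := b] @ [\<eta>])) (at 0)"
        proof (rule Lim_transform_eventually)
          show "eventually (\<lambda>t. Q (ys[l := a]) t + Q (ys[l := b]) t = Q (ys[l := a + b]) t) (at 0)"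
            using ev
          proof eventually_elim
            case (elim t)
            have "D m (v + t *\<^sub>R \<eta>) (ys[l := a + b]) = D m (v + t *\<^sub>R \<eta>) (ys[l := a]) + D m (v + t *\<^sub>R \<eta>) (ys[l := b])"
              using IH[OF elim] True ys unfolding slin_def by blast
            moreover have "D m v (ys[l := a + b]) = D m v (ys[l := a]) + D m v (ys[l := b])"
              using IH[OF v] True ys unfolding slin_def by blast
            ultimately show ?case unfolding Q_def by (simp add: algebra_simps)
          qed
        qed
      qed
      have sc: "D (Suc m) v (ys[l := r *\<^sub>R a] @ [\<eta>]) = r *\<^sub>R D (Suc m) v (ys[l := a] @ [\<eta>])"
      proof (rule tendsto_unique[OF nb Qlim])
        show "length (ys[l := r *\<^sub>R a]) = m" using ys by simp
        have "((\<lambda>t. r *\<^sub>R Q (ys[l := a]) t) \<longlongrightarrow> r *\<^sub>R D (Suc m) v (ys[l := a] @ [\<eta>])) (at 0)"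
          by (intro tvs_scale[OF tv] Qlim tendsto_const) (use ys in auto)
        then show "(Q (ys[l := r *\<^sub>R a]) \<longlongrightarrow> r *\<^sub>R D (Suc m) v (ys[l := a] @ [\<eta>])) (at 0)"
        proof (rule Lim_transform_eventually)
          show "eventually (\<lambda>t. r *\<^sub>R Q (ys[l := a]) t = Q (ys[l := r *\<^sub>R a]) t) (at 0)"
            using ev
          proof eventually_elim
            case (elim t)
            have "D m (v + t *\<^sub>R \<eta>) (ys[l := r *\<^sub>R a]) = r *\<^sub>R D m (v + t *\<^sub>R \<eta>) (ys[l := a])"
              using IH[OF elim] True ys unfolding slin_def by blast
            moreover have "D m v (ys[l := r *\<^sub>R a]) = r *\<^sub>R D m v (ys[l := a])"
              using IH[OF v] True ys unfolding slin_def by blast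
            ultimately show ?case unfolding Q_def by (simp add: algebra_simps)
          qed
        qed
      qed
      show ?thesis using add sc by (simp add: upd)
    next
      case False
      then have lm: "l = m" using l by simp
      have upd: "xs[l := c] = ys @ [c]" for c using xe ys lm by (simp add: list_update_append)
      define R where "R c t = (1/t) *\<^sub>R (D m (v + t *\<^sub>R c) ys - D m v ys)" for c t
      have Rlim: "(R c \<longlongrightarrow> D (Suc m) v (ys @ [c])) (at 0)" for c
        unfolding R_def using hD mk v ys by blast
      have add: "D (Suc m) v (ys @ [a + b]) = D (Suc m) v (ys @ [b]) + D (Suc m) v (ys @ [a])"
      proof (rule tendsto_unique[OF nb Rlim])
        have l1: "((\<lambda>t. (1 / t) *\<^sub>R (D m ((v + t *\<^sub>R a) + t *\<^sub>R b) ys - D m (v + t *\<^sub>R a) ys)) \<longlongrightarrow> D (Suc m) v (ys @ [b])) (at (0::real))"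
        proof (rule ul_D[OF mk v ys])
          show "((\<lambda>t. t) \<longlongrightarrow> 0) (at (0::real))" by (rule tendsto_ident_at)
          show "eventually (\<lambda>t. t \<noteq> (0::real)) (at 0)" by (simp add: eventually_at_filter)
          have "((\<lambda>t. v + t *\<^sub>R a) \<longlongrightarrow> v + 0 *\<^sub>R a) (at (0::real))"
            by (intro tvs_add[OF tw] tvs_scale[OF tw] tendsto_const tendsto_ident_at)
          then show "((\<lambda>t. v + t *\<^sub>R a) \<longlongrightarrow> v) (at (0::real))" by simp
          show "((\<lambda>t. b) \<longlongrightarrow> b) (at (0::real))" by (rule tendsto_const)
        qed
        have "((\<lambda>t. (1 / t) *\<^sub>R (D m ((v + t *\<^sub>R a) + t *\<^sub>R b) ys - D m (v + t *\<^sub>R a) ys) + R a t)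
              \<longlongrightarrow> D (Suc m) v (ys @ [b]) + D (Suc m) v (ys @ [a])) (at 0)"
          by (intro tvs_add[OF tv] l1 Rlim)
        then show "(R (a + b) \<longlongrightarrow> D (Suc m) v (ys @ [b]) + D (Suc m) v (ys @ [a])) (at 0)"
        proof (rule Lim_transform_eventually[OF _ always_eventually], intro allI)
          fix t :: real
          have e: "v + t *\<^sub>R (a + b) = (v + t *\<^sub>R a) + t *\<^sub>R b" by (simp add: algebra_simps)
          show "(1 / t) *\<^sub>R (D m ((v + t *\<^sub>R a) + t *\<^sub>R b) ys - D m (v + t *\<^sub>R a) ys) + R a t = R (a + b) t"
            unfolding R_def e by (rule scaleR_diff_telescope)
        qed
      qed
      have sc: "D (Suc m) v (ys @ [r *\<^sub>R a]) = r *\<^sub>R D (Suc m) v (ys @ [a])"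
      proof (cases "r = 0")
        case True
        have "(R 0 \<longlongrightarrow> 0) (at 0)" unfolding R_def by simp
        then have "D (Suc m) v (ys @ [0]) = 0" using tendsto_unique[OF nb Rlim] by blast
        then show ?thesis using True by simp
      next
        case False
        have fl: "filterlim (\<lambda>t. r * t) (at 0) (at (0::real))"
          unfolding filterlim_at
        proof
          show "eventually (\<lambda>t. r * t \<in> UNIV \<and> r * t \<noteq> 0) (at (0::real))"
            using False by (auto simp: eventually_at_filter)
          show "((\<lambda>t. r * t) \<longlongrightarrow> 0) (at (0::real))"
            by (rule tendsto_mult_right_zero) (rule tendsto_ident_at)
        qed
        have "((\<lambda>t. R a (r * t)) \<longlongrightarrow> D (Suc m) v (ys @ [a])) (at 0)"
          using filterlim_compose[OF Rlim fl] .
        then have "((\<lambda>t. r *\<^sub>R R a (r * t)) \<longlongrightarrow> r *\<^sub>R D (Suc m) v (ys @ [a])) (at 0)"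
          by (intro tvs_scale[OF tv] tendsto_const)
        then have "(R (r *\<^sub>R a) \<longlongrightarrow> r *\<^sub>R D (Suc m) v (ys @ [a])) (at 0)"
          by (rule Lim_transform_eventually) (use False in \<open>simp add: R_def always_eventually mult.commute\<close>)
        then show ?thesis using tendsto_unique[OF nb Rlim] by blast
      qed
      show ?thesis using add sc by (simp add: upd add.commute)
    qed
  qed
qed

end



lemma list_mix_Suc:
  assumes "l < length xs" "length ys = length xs"
  shows "take (Suc l) ys @ drop (Suc l) xs = (take l ys @ drop l xs)[l := ys ! l]"
  using assms by (simp add: take_Suc_conv_app_nth Cons_nth_drop_Suc[symmetric] list_update_append)

lemma list_mix_self:
  assumes "l < length xs" "length ys = length xs"
  shows "(take l ys @ drop l xs)[l := xs ! l] = take l ys @ drop l xs"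
  using assms by (simp add: Cons_nth_drop_Suc[symmetric] list_update_append)

lemma list_mix_nth:
  assumes "l < length xs" "length ys = length xs" "m < length xs"
  shows "(take l ys @ drop l xs)[l := c] ! m = (if m = l then c else if m < l then ys ! m else xs ! m)"
  using assms by (auto simp: nth_list_update nth_append min_def)

lemma list_mix_length:
  assumes "length ys = length xs"
  shows "length ((take l ys @ drop l xs)[l := c]) = length xs"
  using assms by simp

context dfam
begin

lemma tel:
  assumes "i \<le> k" "q \<in> U" "length xs = i" "length ys = i"
  shows "D i q xs - D i q ys = (\<Sum>l<i. D i q ((take l ys @ drop l xs)[l := xs ! l - ys ! l]))"
proof -
  define M where "M l = take l ys @ drop l xs" for l
  have sl: "slin (D i q) i" by (rule lin[OF assms(1,2)])
  have step: "D i q (M l) - D i q (M (Suc l)) = D i q ((M l)[l := xs ! l - ys ! l])" if l: "l < i" for l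
  proof -
    have len: "length (M l) = i" unfolding M_def using assms by simp
    have "D i q ((M l)[l := (xs ! l - ys ! l) + ys ! l]) = D i q ((M l)[l := xs ! l - ys ! l]) + D i q ((M l)[l := ys ! l])"
      using sl l len unfolding slin_def by blast
    moreover have "(M l)[l := (xs ! l - ys ! l) + ys ! l] = M l"
      unfolding M_def using list_mix_self[of l xs ys] l assms by simp
    moreover have "(M l)[l := ys ! l] = M (Suc l)"
      unfolding M_def using list_mix_Suc[of l xs ys] l assms by simp
    ultimately show ?thesis by (simp add: algebra_simps)
  qed
  have "(\<Sum>l<i. D i q (M l) - D i q (M (Suc l))) = D i q (M 0) - D i q (M i)"
    by (rule sum_lessThan_telescope')
  moreover have "M 0 = xs" "M i = ys" unfolding M_def using assms by auto
  ultimately show ?thesis using step unfolding M_def[symmetric] by (metis (no_types, lifting) lessThan_iff sum.cong)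
qed

lemma deriv_formula:
  fixes \<gamma> :: "real \<Rightarrow> 'w" and c :: "real \<Rightarrow> 'w list"
  assumes ik: "i < k" and t: "t \<in> I" and \<gamma>U: "\<forall>s\<in>I. \<gamma> s \<in> U"
    and \<gamma>c: "(\<gamma> \<longlongrightarrow> \<gamma> t) (at t within I)"
    and \<gamma>d: "((\<lambda>s. (1 / (s - t)) *\<^sub>R (\<gamma> s - \<gamma> t)) \<longlongrightarrow> \<gamma>') (at t within I)"
    and cl: "\<forall>s. length (c s) = i" and c'l: "length c' = i"
    and cc: "\<forall>l<i. ((\<lambda>s. c s ! l) \<longlongrightarrow> c t ! l) (at t within I)"
    and cd: "\<forall>l<i. ((\<lambda>s. (1 / (s - t)) *\<^sub>R (c s ! l - c t ! l)) \<longlongrightarrow> c' ! l) (at t within I)"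
  shows "((\<lambda>s. (1 / (s - t)) *\<^sub>R (D i (\<gamma> s) (c s) - D i (\<gamma> t) (c t))) \<longlongrightarrow>
           D (Suc i) (\<gamma> t) (c t @ [\<gamma>']) + (\<Sum>l<i. D i (\<gamma> t) ((c t)[l := c' ! l]))) (at t within I)"
proof -
  let ?F = "at t within I"
  have evI: "eventually (\<lambda>s. s \<in> I \<and> s \<noteq> t) ?F" by (auto simp: eventually_at_filter)
  have \<gamma>tU: "\<gamma> t \<in> U" using \<gamma>U t by blast
  have "((\<lambda>s. s - t) \<longlongrightarrow> t - t) ?F" by (intro tendsto_diff tendsto_ident_at tendsto_const)
  then have ht: "((\<lambda>s. s - t) \<longlongrightarrow> 0) ?F" by simp
  have P2: "((\<lambda>s. (1 / (s - t)) *\<^sub>R (D i (\<gamma> s) (c t) - D i (\<gamma> t) (c t))) \<longlongrightarrow> D (Suc i) (\<gamma> t) (c t @ [\<gamma>'])) ?F"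
  proof -
    have "((\<lambda>s. (1 / (s - t)) *\<^sub>R (D i (\<gamma> t + (s - t) *\<^sub>R ((1 / (s - t)) *\<^sub>R (\<gamma> s - \<gamma> t))) (c t) - D i (\<gamma> t) (c t)))
           \<longlongrightarrow> D (Suc i) (\<gamma> t) (c t @ [\<gamma>'])) ?F"
      by (rule ul_D[OF ik \<gamma>tU cl[rule_format] ht _ tendsto_const \<gamma>d])
         (use evI in \<open>auto elim: eventually_mono\<close>)
    then show ?thesis
    proof (rule Lim_transform_eventually)
      show "eventually (\<lambda>s. (1 / (s - t)) *\<^sub>R (D i (\<gamma> t + (s - t) *\<^sub>R ((1 / (s - t)) *\<^sub>R (\<gamma> s - \<gamma> t))) (c t) - D i (\<gamma> t) (c t))
         = (1 / (s - t)) *\<^sub>R (D i (\<gamma> s) (c t) - D i (\<gamma> t) (c t))) ?F"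
        using evI by eventually_elim simp
    qed
  qed
  define T where "T l s = (take l (c t) @ drop l (c s))[l := (1 / (s - t)) *\<^sub>R (c s ! l - c t ! l)]" for l s
  have Tlim: "((\<lambda>s. D i (\<gamma> s) (T l s)) \<longlongrightarrow> D i (\<gamma> t) ((c t)[l := c' ! l])) ?F" if l: "l < i" for l
  proof (rule cm_tendsto[where U=U and j=i])
    show "cont_multi U i (D i)" using hC ik by simp
    show "\<gamma> t \<in> U" by (rule \<gamma>tU)
    show "length ((c t)[l := c' ! l]) = i" using cl by simp
    show "(\<gamma> \<longlongrightarrow> \<gamma> t) ?F" by (rule \<gamma>c)
    show "eventually (\<lambda>s. \<gamma> s \<in> U) ?F" using evI by eventually_elim (use \<gamma>U in blast)
    show "eventually (\<lambda>s. length (T l s) = i) ?F" unfolding T_def using cl l by simp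
    show "\<forall>m<i. ((\<lambda>s. T l s ! m) \<longlongrightarrow> (c t)[l := c' ! l] ! m) ?F"
    proof (intro allI impI)
      fix m assume m: "m < i"
      have Tm: "T l s ! m = (if m = l then (1 / (s - t)) *\<^sub>R (c s ! l - c t ! l) else if m < l then c t ! m else c s ! m)" for s
        unfolding T_def using list_mix_nth[of l "c s" "c t" m] cl l m by simp
      show "((\<lambda>s. T l s ! m) \<longlongrightarrow> (c t)[l := c' ! l] ! m) ?F"
        unfolding Tm using cd cc l m cl by (cases "m < l") (auto simp: nth_list_update)
    qed
  qed
  have P1: "((\<lambda>s. (1 / (s - t)) *\<^sub>R (D i (\<gamma> s) (c s) - D i (\<gamma> s) (c t))) \<longlongrightarrow> (\<Sum>l<i. D i (\<gamma> t) ((c t)[l := c' ! l]))) ?F"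
  proof -
    have "((\<lambda>s. \<Sum>l<i. D i (\<gamma> s) (T l s)) \<longlongrightarrow> (\<Sum>l<i. D i (\<gamma> t) ((c t)[l := c' ! l]))) ?F"
      by (rule tvs_sum[OF tv]) (use Tlim in auto)
    then show ?thesis
    proof (rule Lim_transform_eventually)
      show "eventually (\<lambda>s. (\<Sum>l<i. D i (\<gamma> s) (T l s)) = (1 / (s - t)) *\<^sub>R (D i (\<gamma> s) (c s) - D i (\<gamma> s) (c t))) ?F"
        using evI
      proof eventually_elim
        case (elim s)
        have qU: "\<gamma> s \<in> U" using elim \<gamma>U by blast
        have sl: "slin (D i (\<gamma> s)) i" using lin[OF _ qU] ik by simp
        have "(1 / (s - t)) *\<^sub>R (D i (\<gamma> s) (c s) - D i (\<gamma> s) (c t)) =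
              (\<Sum>l<i. (1 / (s - t)) *\<^sub>R D i (\<gamma> s) ((take l (c t) @ drop l (c s))[l := c s ! l - c t ! l]))"
          using tel[OF _ qU cl[rule_format] cl[rule_format]] ik by (simp add: scaleR_sum_right)
        also have "\<dots> = (\<Sum>l<i. D i (\<gamma> s) (T l s))"
        proof (rule sum.cong[OF refl])
          fix l assume "l \<in> {..<i}"
          then have l: "l < i" by simp
          have len: "length (take l (c t) @ drop l (c s)) = i" using cl by simp
          have "D i (\<gamma> s) (((take l (c t) @ drop l (c s)))[l := (1 / (s - t)) *\<^sub>R (c s ! l - c t ! l)]) =
                (1 / (s - t)) *\<^sub>R D i (\<gamma> s) ((take l (c t) @ drop l (c s))[l := c s ! l - c t ! l])"
            using sl l len unfolding slin_def by blast
          then show "(1 / (s - t)) *\<^sub>R D i (\<gamma> s) ((take l (c t) @ drop l (c s))[l := c s ! l - c t ! l]) = D i (\<gamma> s) (T l s)"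
            unfolding T_def by simp
        qed
        finally show ?case by simp
      qed
    qed
  qed
  have "((\<lambda>s. (1 / (s - t)) *\<^sub>R (D i (\<gamma> s) (c t) - D i (\<gamma> t) (c t)) + (1 / (s - t)) *\<^sub>R (D i (\<gamma> s) (c s) - D i (\<gamma> s) (c t)))
        \<longlongrightarrow> D (Suc i) (\<gamma> t) (c t @ [\<gamma>']) + (\<Sum>l<i. D i (\<gamma> t) ((c t)[l := c' ! l]))) ?F"
    by (rule tvs_add[OF tv P2 P1])
  then show ?thesis
    by (rule Lim_transform_eventually[OF _ always_eventually])
       (simp add: scaleR_diff_telescope add.commute)
qed

end



lemma cd_mono: "curve_derivs n X x I \<Longrightarrow> n' \<le> n \<Longrightarrow> curve_derivs n' X x I"
  unfolding curve_derivs_def by auto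

lemma cd_shift: "curve_derivs (Suc n) X x I \<Longrightarrow> curve_derivs n (\<lambda>j. X (Suc j)) (X 1) I"
  unfolding curve_derivs_def by auto

lemma cd_cong: "curve_derivs n X x I \<Longrightarrow> \<forall>s\<in>I. y s = x s \<Longrightarrow> curve_derivs n X y I"
  unfolding curve_derivs_def by auto

lemma cd_self: "curve_derivs n X x I \<Longrightarrow> curve_derivs n X (X 0) I"
  unfolding curve_derivs_def by auto

lemma tvs_cont_add:
  assumes "tvs TYPE('v::{real_vector,t2_space})" "continuous_on I (f :: real \<Rightarrow> 'v)" "continuous_on I g"
  shows "continuous_on I (\<lambda>s. f s + g s)"
  using assms unfolding continuous_on_def by (auto intro: tvs_add)

lemma tvs_cont_minus:
  assumes "tvs TYPE('v::{real_vector,t2_space})" "continuous_on I (f :: real \<Rightarrow> 'v)"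
  shows "continuous_on I (\<lambda>s. - f s)"
  using assms unfolding continuous_on_def by (auto intro: tvs_minus)

lemma cd_add:
  fixes X Y :: "nat \<Rightarrow> real \<Rightarrow> 'v::{real_vector,t2_space}"
  assumes tv: "tvs TYPE('v)" and "curve_derivs n X x I" "curve_derivs n Y y I"
  shows "curve_derivs n (\<lambda>j s. X j s + Y j s) (\<lambda>s. x s + y s) I"
  unfolding curve_derivs_def
proof (intro conjI allI impI ballI)
  show "\<And>t. t \<in> I \<Longrightarrow> X 0 t + Y 0 t = x t + y t" using assms unfolding curve_derivs_def by auto
next
  fix j t assume j: "j < n" and t: "t \<in> I"
  have "((\<lambda>s. (1 / (s - t)) *\<^sub>R (X j s - X j t) + (1 / (s - t)) *\<^sub>R (Y j s - Y j t)) \<longlongrightarrow> X (Suc j) t + Y (Suc j) t) (at t within I)"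
    using assms j t unfolding curve_derivs_def by (intro tvs_add[OF tv]) auto
  then show "((\<lambda>s. (1 / (s - t)) *\<^sub>R (X j s + Y j s - (X j t + Y j t))) \<longlongrightarrow> X (Suc j) t + Y (Suc j) t) (at t within I)"
    by (rule Lim_transform_eventually[OF _ always_eventually]) (simp add: algebra_simps)
next
  fix j assume "j \<le> n"
  then show "continuous_on I (\<lambda>s. X j s + Y j s)"
    using assms unfolding curve_derivs_def by (intro tvs_cont_add[OF tv]) auto
qed

lemma cd_neg:
  fixes X :: "nat \<Rightarrow> real \<Rightarrow> 'v::{real_vector,t2_space}"
  assumes tv: "tvs TYPE('v)" and "curve_derivs n X x I"
  shows "curve_derivs n (\<lambda>j s. - X j s) (\<lambda>s. - x s) I"
  unfolding curve_derivs_def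
proof (intro conjI allI impI ballI)
  show "\<And>t. t \<in> I \<Longrightarrow> - X 0 t = - x t" using assms unfolding curve_derivs_def by auto
next
  fix j t assume j: "j < n" and t: "t \<in> I"
  have "((\<lambda>s. - ((1 / (s - t)) *\<^sub>R (X j s - X j t))) \<longlongrightarrow> - X (Suc j) t) (at t within I)"
    using assms j t unfolding curve_derivs_def by (intro tvs_minus[OF tv]) auto
  then show "((\<lambda>s. (1 / (s - t)) *\<^sub>R (- X j s - - X j t)) \<longlongrightarrow> - X (Suc j) t) (at t within I)"
    by (rule Lim_transform_eventually[OF _ always_eventually]) (simp add: algebra_simps)
next
  fix j assume "j \<le> n"
  then show "continuous_on I (\<lambda>s. - X j s)"
    using assms unfolding curve_derivs_def by (intro tvs_cont_minus[OF tv]) auto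
qed

lemma cd_zero: "curve_derivs n (\<lambda>j s. 0) (\<lambda>s. 0) I"
  unfolding curve_derivs_def by (auto intro: continuous_on_const)

lemma cd_sum:
  fixes X :: "'i \<Rightarrow> nat \<Rightarrow> real \<Rightarrow> 'v::{real_vector,t2_space}"
  assumes tv: "tvs TYPE('v)" and "finite S" "\<forall>l\<in>S. curve_derivs n (X l) (x l) I"
  shows "curve_derivs n (\<lambda>j s. \<Sum>l\<in>S. X l j s) (\<lambda>s. \<Sum>l\<in>S. x l s) I"
  using assms(2,3)
proof (induction S rule: finite_induct)
  case empty then show ?case by (simp add: cd_zero)
next
  case (insert a S)
  then show ?case using cd_add[OF tv, of n "X a" "x a" I] by simp
qed

lemma cd_pair:
  assumes "curve_derivs n X x I" "curve_derivs n Y y I"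
  shows "curve_derivs n (\<lambda>j s. (X j s, Y j s)) (\<lambda>s. (X 0 s, Y 0 s)) I"
  unfolding curve_derivs_def
proof (intro conjI allI impI ballI)
  show "\<And>t. t \<in> I \<Longrightarrow> (X 0 t, Y 0 t) = (X 0 t, Y 0 t)" by simp
next
  fix j t assume j: "j < n" and t: "t \<in> I"
  have "((\<lambda>s. ((1 / (s - t)) *\<^sub>R (X j s - X j t), (1 / (s - t)) *\<^sub>R (Y j s - Y j t))) \<longlongrightarrow> (X (Suc j) t, Y (Suc j) t)) (at t within I)"
    using assms j t unfolding curve_derivs_def by (intro tendsto_Pair) auto
  then show "((\<lambda>s. (1 / (s - t)) *\<^sub>R ((X j s, Y j s) - (X j t, Y j t))) \<longlongrightarrow> (X (Suc j) t, Y (Suc j) t)) (at t within I)"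
    by simp
next
  fix j assume "j \<le> n"
  then show "continuous_on I (\<lambda>s. (X j s, Y j s))"
    using assms unfolding curve_derivs_def by (intro continuous_on_Pair) auto
qed

context dfam
begin

lemma phi_cont:
  assumes "i \<le> k" "length Cs = i" "\<forall>s\<in>I. \<Gamma> 0 s \<in> U" "continuous_on I (\<Gamma> 0)"
    "\<forall>C\<in>set Cs. continuous_on I (C 0)"
  shows "continuous_on I (\<lambda>s. D i (\<Gamma> 0 s) (map (\<lambda>C. C 0 s) Cs))"
  unfolding continuous_on_def
proof
  fix t assume t: "t \<in> I"
  show "((\<lambda>s. D i (\<Gamma> 0 s) (map (\<lambda>C. C 0 s) Cs)) \<longlongrightarrow> D i (\<Gamma> 0 t) (map (\<lambda>C. C 0 t) Cs)) (at t within I)"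
  proof (rule cm_tendsto[where U=U and j=i])
    show "cont_multi U i (D i)" using hC assms(1) by simp
    show "\<Gamma> 0 t \<in> U" using assms(3) t by blast
    show "length (map (\<lambda>C. C 0 t) Cs) = i" using assms(2) by simp
    show "(\<Gamma> 0 \<longlongrightarrow> \<Gamma> 0 t) (at t within I)" using assms(4) t unfolding continuous_on_def by blast
    show "eventually (\<lambda>s. \<Gamma> 0 s \<in> U) (at t within I)"
      using assms(3) by (auto simp: eventually_at_filter)
    show "eventually (\<lambda>s. length (map (\<lambda>C. C 0 s) Cs) = i) (at t within I)" using assms(2) by simp
    show "\<forall>m<i. ((\<lambda>s. map (\<lambda>C. C 0 s) Cs ! m) \<longlongrightarrow> map (\<lambda>C. C 0 t) Cs ! m) (at t within I)"
      using assms(2,5) t unfolding continuous_on_def by (auto simp: nth_map)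
  qed
qed

lemma main:
  "\<forall>i \<Gamma> Cs. i + n \<le> k \<longrightarrow> length Cs = i \<longrightarrow> (\<forall>s\<in>I. \<Gamma> 0 s \<in> U) \<longrightarrow> curve_derivs n \<Gamma> (\<Gamma> 0) I \<longrightarrow>
     (\<forall>C\<in>set Cs. curve_derivs n C (C 0) I) \<longrightarrow>
     (\<exists>Y. curve_derivs n Y (\<lambda>s. D i (\<Gamma> 0 s) (map (\<lambda>C. C 0 s) Cs)) I)"
proof (induction n)
  case 0
  show ?case
  proof (intro allI impI)
    fix i and \<Gamma> :: "nat \<Rightarrow> real \<Rightarrow> 'w" and Cs :: "(nat \<Rightarrow> real \<Rightarrow> 'w) list"
    assume a: "i + 0 \<le> k" "length Cs = i" "\<forall>s\<in>I. \<Gamma> 0 s \<in> U" "curve_derivs 0 \<Gamma> (\<Gamma> 0) I"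
      "\<forall>C\<in>set Cs. curve_derivs 0 C (C 0) I"
    have "continuous_on I (\<lambda>s. D i (\<Gamma> 0 s) (map (\<lambda>C. C 0 s) Cs))"
      by (rule phi_cont) (use a in \<open>auto simp: curve_derivs_def\<close>)
    then have "curve_derivs 0 (\<lambda>j s. D i (\<Gamma> 0 s) (map (\<lambda>C. C 0 s) Cs)) (\<lambda>s. D i (\<Gamma> 0 s) (map (\<lambda>C. C 0 s) Cs)) I"
      unfolding curve_derivs_def by auto
    then show "\<exists>Y. curve_derivs 0 Y (\<lambda>s. D i (\<Gamma> 0 s) (map (\<lambda>C. C 0 s) Cs)) I" by blast
  qed
next
  case (Suc n)
  show ?case
  proof (intro allI impI)
    fix i and \<Gamma> :: "nat \<Rightarrow> real \<Rightarrow> 'w" and Cs :: "(nat \<Rightarrow> real \<Rightarrow> 'w) list"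
    assume a: "i + Suc n \<le> k" "length Cs = i" "\<forall>s\<in>I. \<Gamma> 0 s \<in> U" "curve_derivs (Suc n) \<Gamma> (\<Gamma> 0) I"
      "\<forall>C\<in>set Cs. curve_derivs (Suc n) C (C 0) I"
    define \<Phi> where "\<Phi> s = D i (\<Gamma> 0 s) (map (\<lambda>C. C 0 s) Cs)" for s
    have ik: "i < k" using a(1) by simp
    have \<Gamma>n: "curve_derivs n \<Gamma> (\<Gamma> 0) I" using cd_mono[OF a(4)] by simp
    have \<Gamma>sh: "curve_derivs n (\<lambda>j. \<Gamma> (Suc j)) ((\<lambda>j. \<Gamma> (Suc j)) 0) I" using cd_shift[OF a(4)] by simp
    have Csn: "\<forall>C\<in>set Cs. curve_derivs n C (C 0) I"
    proof
      fix C assume "C \<in> set Cs"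
      then have "curve_derivs (Suc n) C (C 0) I" using a(5) by blast
      then show "curve_derivs n C (C 0) I" by (rule cd_mono) simp
    qed
    have Csn': "\<forall>C\<in>set (Cs @ [\<lambda>j. \<Gamma> (Suc j)]). curve_derivs n C (C 0) I" using Csn \<Gamma>sh by auto
    obtain Y0 where Y0: "curve_derivs n Y0 (\<lambda>s. D (Suc i) (\<Gamma> 0 s) (map (\<lambda>C. C 0 s) (Cs @ [\<lambda>j. \<Gamma> (Suc j)]))) I"
      apply (rule exE[OF Suc.IH[rule_format, of "Suc i" "Cs @ [\<lambda>j. \<Gamma> (Suc j)]" \<Gamma>]])
      using a(1,2,3) \<Gamma>n Csn' by auto
    have AL: "\<forall>l. \<exists>Y. l < i \<longrightarrow> curve_derivs n Y (\<lambda>s. D i (\<Gamma> 0 s) (map (\<lambda>C. C 0 s) (Cs[l := (\<lambda>j. (Cs ! l) (Suc j))]))) I"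
    proof (intro allI)
      fix l
      show "\<exists>Y. l < i \<longrightarrow> curve_derivs n Y (\<lambda>s. D i (\<Gamma> 0 s) (map (\<lambda>C. C 0 s) (Cs[l := (\<lambda>j. (Cs ! l) (Suc j))]))) I"
      proof (cases "l < i")
        case True
        have "Cs ! l \<in> set Cs" using True a(2) by simp
        then have sh: "curve_derivs n (\<lambda>j. (Cs ! l) (Suc j)) ((\<lambda>j. (Cs ! l) (Suc j)) 0) I"
          using cd_shift a(5) by fastforce
        have CL: "\<forall>C\<in>set (Cs[l := (\<lambda>j. (Cs ! l) (Suc j))]). curve_derivs n C (C 0) I"
          using Csn sh set_update_subset_insert[of Cs l "\<lambda>j. (Cs ! l) (Suc j)"] by blast
        have "\<exists>Y. curve_derivs n Y (\<lambda>s. D i (\<Gamma> 0 s) (map (\<lambda>C. C 0 s) (Cs[l := (\<lambda>j. (Cs ! l) (Suc j))]))) I"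
          apply (rule Suc.IH[rule_format, of i "Cs[l := (\<lambda>j. (Cs ! l) (Suc j))]" \<Gamma>])
          using a(1,2,3) \<Gamma>n CL by auto
        then show ?thesis by blast
      qed auto
    qed
    obtain YL where YL: "\<forall>l<i. curve_derivs n (YL l) (\<lambda>s. D i (\<Gamma> 0 s) (map (\<lambda>C. C 0 s) (Cs[l := (\<lambda>j. (Cs ! l) (Suc j))]))) I"
      using choice[OF AL] by blast
    define Z where "Z j s = Y0 j s + (\<Sum>l<i. YL l j s)" for j s
    define \<Phi>' where "\<Phi>' s = D (Suc i) (\<Gamma> 0 s) (map (\<lambda>C. C 0 s) (Cs @ [\<lambda>j. \<Gamma> (Suc j)])) +
        (\<Sum>l<i. D i (\<Gamma> 0 s) (map (\<lambda>C. C 0 s) (Cs[l := (\<lambda>j. (Cs ! l) (Suc j))])))" for s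
    have Z: "curve_derivs n Z \<Phi>' I" unfolding Z_def \<Phi>'_def
      by (intro cd_add[OF tv] Y0 cd_sum[OF tv]) (use YL in auto)
    define W where "W j = (case j of 0 \<Rightarrow> \<Phi> | Suc j' \<Rightarrow> Z j')" for j
    have "curve_derivs (Suc n) W \<Phi> I"
      unfolding curve_derivs_def
    proof (intro conjI allI impI ballI)
      show "\<And>t. W 0 t = \<Phi> t" unfolding W_def by simp
    next
      fix j t assume j: "j < Suc n" and t: "t \<in> I"
      show "((\<lambda>s. (1 / (s - t)) *\<^sub>R (W j s - W j t)) \<longlongrightarrow> W (Suc j) t) (at t within I)"
      proof (cases j)
        case (Suc j')
        then show ?thesis using Z j t unfolding W_def curve_derivs_def by auto
      next
        case 0
        have Zt: "Z 0 t = \<Phi>' t" using Z t unfolding curve_derivs_def by auto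
        have df: "((\<lambda>s. (1 / (s - t)) *\<^sub>R (D i (\<Gamma> 0 s) (map (\<lambda>C. C 0 s) Cs) - D i (\<Gamma> 0 t) (map (\<lambda>C. C 0 t) Cs))) \<longlongrightarrow>
           D (Suc i) (\<Gamma> 0 t) (map (\<lambda>C. C 0 t) Cs @ [\<Gamma> 1 t]) + (\<Sum>l<i. D i (\<Gamma> 0 t) ((map (\<lambda>C. C 0 t) Cs)[l := map (\<lambda>C. C 1 t) Cs ! l]))) (at t within I)"
        proof (rule deriv_formula[OF ik t a(3)])
          show "(\<Gamma> 0 \<longlongrightarrow> \<Gamma> 0 t) (at t within I)"
            using a(4) t unfolding curve_derivs_def continuous_on_def by blast
          show "((\<lambda>s. (1 / (s - t)) *\<^sub>R (\<Gamma> 0 s - \<Gamma> 0 t)) \<longlongrightarrow> \<Gamma> 1 t) (at t within I)"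
            using a(4) t unfolding curve_derivs_def by auto
          show "\<forall>s. length (map (\<lambda>C. C 0 s) Cs) = i" using a(2) by simp
          show "length (map (\<lambda>C. C 1 t) Cs) = i" using a(2) by simp
          show "\<forall>l<i. ((\<lambda>s. map (\<lambda>C. C 0 s) Cs ! l) \<longlongrightarrow> map (\<lambda>C. C 0 t) Cs ! l) (at t within I)"
            using a(2,5) t unfolding curve_derivs_def continuous_on_def by auto
          show "\<forall>l<i. ((\<lambda>s. (1 / (s - t)) *\<^sub>R (map (\<lambda>C. C 0 s) Cs ! l - map (\<lambda>C. C 0 t) Cs ! l)) \<longlongrightarrow> map (\<lambda>C. C 1 t) Cs ! l) (at t within I)"
            using a(2,5) t unfolding curve_derivs_def by auto
        qed
        have "D (Suc i) (\<Gamma> 0 t) (map (\<lambda>C. C 0 t) Cs @ [\<Gamma> 1 t]) + (\<Sum>l<i. D i (\<Gamma> 0 t) ((map (\<lambda>C. C 0 t) Cs)[l := map (\<lambda>C. C 1 t) Cs ! l]))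
             = \<Phi>' t"
          unfolding \<Phi>'_def using a(2) by (simp add: map_update)
        then show ?thesis using df Zt 0 unfolding W_def \<Phi>_def by simp
      qed
    next
      fix j assume j: "j \<le> Suc n"
      show "continuous_on I (W j)"
      proof (cases j)
        case 0
        have "continuous_on I \<Phi>" unfolding \<Phi>_def
          by (rule phi_cont) (use a ik in \<open>auto simp: curve_derivs_def\<close>)
        then show ?thesis using 0 unfolding W_def by simp
      next
        case (Suc j')
        then show ?thesis using Z j unfolding W_def curve_derivs_def by auto
      qed
    qed
    then show "\<exists>Y. curve_derivs (Suc n) Y (\<lambda>s. D i (\<Gamma> 0 s) (map (\<lambda>C. C 0 s) Cs)) I"
      unfolding \<Phi>_def by blast
  qed
qed

end



theorem lemma6p2:
  fixes \<Omega> :: "'a::{real_vector,t2_space} set"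
    and g :: "'a \<Rightarrow> 'a \<Rightarrow> 'a \<Rightarrow> real"
    and A :: "'a \<Rightarrow> 'a \<Rightarrow> 'a \<Rightarrow> 'a"
    and k :: nat
    and I :: "real set"
    and x :: "real \<Rightarrow> 'a"
  assumes "lcs_axioms TYPE('a)"
    and "open \<Omega>"
    and "riemannian_metric \<Omega> g"
    and "metric_Ck 1 \<Omega> g"
    and "levi_civita \<Omega> g A"
    and "connection_Ck k \<Omega> A"
    and "k \<ge> 1"
    and "geodesic \<Omega> A I x"
  shows "curve_Ck (k + 2) x I"
proof -
  have lcs: "lcs_axioms TYPE('a)" by fact
  have tva: "tvs TYPE('a)" by (rule lcs_tvs[OF lcs])
  have tw: "tvs TYPE('a \<times> 'a \<times> 'a)" by (rule tvs_prod[OF tva tvs_prod[OF tva tva]])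
  have oU: "open (\<Omega> \<times> UNIV \<times> (UNIV :: 'a set))" by (intro open_Times assms(2) open_UNIV)
  obtain D :: "nat \<Rightarrow> 'a \<times> 'a \<times> 'a \<Rightarrow> ('a \<times> 'a \<times> 'a) list \<Rightarrow> 'a" where
    D0: "\<forall>v\<in>\<Omega> \<times> UNIV \<times> UNIV. D 0 v [] = (\<lambda>(v, \<xi>, w). A v \<xi> w) v" and
    hD: "\<forall>j<k. \<forall>v\<in>\<Omega> \<times> UNIV \<times> UNIV. \<forall>xs \<eta>. length xs = j \<longrightarrow>
           ((\<lambda>t::real. (1 / t) *\<^sub>R (D j (v + t *\<^sub>R \<eta>) xs - D j v xs)) \<longlongrightarrow> D (Suc j) v (xs @ [\<eta>])) (at 0)" and
    hC: "\<forall>j\<le>k. cont_multi (\<Omega> \<times> UNIV \<times> UNIV) j (D j)"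
    using assms(6) unfolding connection_Ck_def Ck_def by blast
  interpret d: dfam "\<Omega> \<times> UNIV \<times> UNIV" D k
    by (unfold_locales) (use lcs tw oU hD hC in auto)
  obtain Xg where geo: "\<forall>t\<in>I. x t \<in> \<Omega>" "curve_derivs 2 Xg x I"
    "\<forall>t\<in>I. Xg 2 t + A (x t) (Xg 1 t) (Xg 1 t) = 0"
    using assms(8) unfolding geodesic_def by blast
  have claim: "2 \<le> m \<longrightarrow> m \<le> k + 2 \<longrightarrow> (\<exists>X. curve_derivs m X x I \<and> (\<forall>t\<in>I. X 1 t = Xg 1 t \<and> X 2 t = Xg 2 t))" for m
  proof (induction m)
    case 0 then show ?case by simp
  next
    case (Suc m)
    show ?case
    proof (intro impI)
      assume m1: "2 \<le> Suc m" and m2: "Suc m \<le> k + 2"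
      show "\<exists>X. curve_derivs (Suc m) X x I \<and> (\<forall>t\<in>I. X 1 t = Xg 1 t \<and> X 2 t = Xg 2 t)"
      proof (cases "m = 1")
        case True
        then have "Suc m = 2" by simp
        then show ?thesis using geo(2) by metis
      next
        case False
        then have m3: "2 \<le> m" using m1 by simp
        then obtain X where X: "curve_derivs m X x I" "\<forall>t\<in>I. X 1 t = Xg 1 t \<and> X 2 t = Xg 2 t"
          using Suc.IH m2 by auto
        define n where "n = m - 1"
        have mn: "m = Suc n" unfolding n_def using m3 by simp
        have Xn: "curve_derivs n X x I" using cd_mono[OF X(1)] mn by simp
        have Xsh: "curve_derivs n (\<lambda>j. X (Suc j)) (X 1) I" using cd_shift[of n X x I] X(1) mn by simp
        define \<Gamma> where "\<Gamma> j s = (X j s, X (Suc j) s, X (Suc j) s)" for j s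
        have \<Gamma>cd: "curve_derivs n \<Gamma> (\<Gamma> 0) I"
          using cd_pair[OF Xn cd_pair[OF Xsh Xsh]] unfolding \<Gamma>_def by simp
        have x0: "\<forall>t\<in>I. X 0 t = x t" using X(1) unfolding curve_derivs_def by blast
        have \<Gamma>U: "\<forall>s\<in>I. \<Gamma> 0 s \<in> \<Omega> \<times> UNIV \<times> UNIV" unfolding \<Gamma>_def using x0 geo(1) by auto
        have "n \<le> k" using m2 mn by simp
        then obtain Y where Y: "curve_derivs n Y (\<lambda>s. D 0 (\<Gamma> 0 s) (map (\<lambda>C. C 0 s) [])) I"
          using d.main[of n I, rule_format, of 0 "[]" \<Gamma>] \<Gamma>U \<Gamma>cd by auto
        have Y0: "Y 0 t = A (X 0 t) (X 1 t) (X 1 t)" if t: "t \<in> I" for t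
        proof -
          have "Y 0 t = D 0 (\<Gamma> 0 t) []" using Y t unfolding curve_derivs_def by simp
          also have "\<dots> = A (X 0 t) (X 1 t) (X 1 t)" using D0 \<Gamma>U t unfolding \<Gamma>_def by auto
          finally show ?thesis .
        qed
        have X2: "X 2 t = - Y 0 t" if t: "t \<in> I" for t
        proof -
          have "Xg 2 t = - A (x t) (Xg 1 t) (Xg 1 t)" using geo(3) t by (simp add: eq_neg_iff_add_eq_0)
          then show ?thesis using X(2) x0 Y0 t by auto
        qed
        have N: "curve_derivs n (\<lambda>j s. - Y j s) (\<lambda>s. - Y 0 s) I" by (rule cd_neg[OF tva cd_self[OF Y]])
        define X' where "X' j = (if j < 2 then X j else (\<lambda>s. - Y (j - 2) s))" for j
        have "curve_derivs (Suc m) X' x I"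
          unfolding curve_derivs_def
        proof (intro conjI allI impI ballI)
          show "\<And>t. t \<in> I \<Longrightarrow> X' 0 t = x t" using x0 unfolding X'_def by simp
        next
          fix j t assume j: "j < Suc m" and t: "t \<in> I"
          show "((\<lambda>s. (1 / (s - t)) *\<^sub>R (X' j s - X' j t)) \<longlongrightarrow> X' (Suc j) t) (at t within I)"
          proof (cases "j < 2")
            case True
            then have "j < m" using m3 by simp
            then have l: "((\<lambda>s. (1 / (s - t)) *\<^sub>R (X j s - X j t)) \<longlongrightarrow> X (Suc j) t) (at t within I)"
              using X(1) t unfolding curve_derivs_def by blast
            show ?thesis
            proof (cases "j = 0")
              case True then show ?thesis using l unfolding X'_def by simp
            next
              case False
              then have "j = 1" using \<open>j < 2\<close> by simp
              then show ?thesis using l X2[OF t] unfolding X'_def by (simp add: numeral_2_eq_2)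
            qed
          next
            case False
            then obtain j' where j': "j = Suc (Suc j')" by (metis add_2_eq_Suc less_iff_Suc_add not_less_eq)
            then have "j' < n" using j mn by simp
            then have "((\<lambda>s. (1 / (s - t)) *\<^sub>R (- Y j' s - - Y j' t)) \<longlongrightarrow> - Y (Suc j') t) (at t within I)"
              using N t unfolding curve_derivs_def by blast
            then show ?thesis using j' unfolding X'_def by simp
          qed
        next
          fix j assume j: "j \<le> Suc m"
          show "continuous_on I (X' j)"
          proof (cases "j < 2")
            case True
            then show ?thesis using X(1) m3 unfolding X'_def curve_derivs_def by auto
          next
            case False
            then have "j - 2 \<le> n" using j mn by simp
            then show ?thesis using N False unfolding X'_def curve_derivs_def by auto
          qed
        qed
        moreover have "\<forall>t\<in>I. X' 1 t = Xg 1 t \<and> X' 2 t = Xg 2 t"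
          using X(2) X2 unfolding X'_def by simp
        ultimately show ?thesis by blast
      qed
    qed
  qed
  have "k + 2 \<ge> 2" by simp
  then obtain X where "curve_derivs (k + 2) X x I" using claim[of "k+2"] by blast
  then show ?thesis unfolding curve_Ck_def by blast
qed


end
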